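(* Let $R=R_1\times\cdots\times R_t$ where $R_i=(\mathbb{F}_{q_i})^{m_i\times m_i}$ for prime powers $q_i$ and positive integers $m_i$. Then the normalized homogeneous weight $\omega$ on $R$ is given by \[ \omega(A_1,\ldots,A_t)=1-\prod_{i=1}^t\frac{(-1)^{r_i}q_i^{\binom{r_i}{2}}}{\alpha_{q_i,r_i}(q_i^{m_i})},\qquad r_i=\mathrm{rk}(A_i). \]
   Context: $\alpha_{q,r}(x)=\prod_{j=0}^{r-1}(x-q^j)$ (so $\alpha_{q,0}=1$) and $\binom{r}{2}=r(r-1)/2$. The normalized homogeneous weight on a finite Frobenius ring $R$ is the unique map $\omega:R\to\mathbb{R}$ with $\omega(0)=0$, $\omega(x)=\omega(y)$ whenever $Rx=Ry$, and $\sum_{y\in Rx}\omega(y)=|Rx|$ for every $x\in R\setminus\{0\}$. *)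

theory Defs
  imports Complex_Main "HOL-Algebra.Ring"
begin

definition mat_carrier :: "('a, 'b) ring_scheme \<Rightarrow> nat \<Rightarrow> (nat \<Rightarrow> nat \<Rightarrow> 'a) set" where
  "mat_carrier K n =
     {A. (\<forall>j k. j < n \<and> k < n \<longrightarrow> A j k \<in> carrier K) \<and>
         (\<forall>j k. \<not> (j < n \<and> k < n) \<longrightarrow> A j k = undefined)}"

definition mat_mult :: "('a, 'b) ring_scheme \<Rightarrow> nat \<Rightarrow> (nat \<Rightarrow> nat \<Rightarrow> 'a) \<Rightarrow> (nat \<Rightarrow> nat \<Rightarrow> 'a) \<Rightarrow> (nat \<Rightarrow> nat \<Rightarrow> 'a)" where
  "mat_mult K n A B =
     (\<lambda>j k. if j < n \<and> k < n then finsum K (\<lambda>l. mult K (A j l) (B l k)) {..<n} else undefined)"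

definition mat_zero :: "('a, 'b) ring_scheme \<Rightarrow> nat \<Rightarrow> (nat \<Rightarrow> nat \<Rightarrow> 'a)" where
  "mat_zero K n = (\<lambda>j k. if j < n \<and> k < n then zero K else undefined)"

definition cols_indep :: "('a, 'b) ring_scheme \<Rightarrow> nat \<Rightarrow> (nat \<Rightarrow> nat \<Rightarrow> 'a) \<Rightarrow> nat set \<Rightarrow> bool" where
  "cols_indep K n A S \<longleftrightarrow> S \<subseteq> {..<n} \<and>
     (\<forall>c. (\<forall>k\<in>S. c k \<in> carrier K) \<longrightarrow>
          (\<forall>j<n. finsum K (\<lambda>k. mult K (c k) (A j k)) S = zero K) \<longrightarrow>
          (\<forall>k\<in>S. c k = zero K))"

definition mat_rank :: "('a, 'b) ring_scheme \<Rightarrow> nat \<Rightarrow> (nat \<Rightarrow> nat \<Rightarrow> 'a) \<Rightarrow> nat" where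
  "mat_rank K n A = Max {card S | S. cols_indep K n A S}"

definition prod_carrier :: "nat \<Rightarrow> (nat \<Rightarrow> nat) \<Rightarrow> (nat \<Rightarrow> ('a, 'b) ring_scheme) \<Rightarrow> (nat \<Rightarrow> nat \<Rightarrow> nat \<Rightarrow> 'a) set" where
  "prod_carrier t m F = {A. (\<forall>i<t. A i \<in> mat_carrier (F i) (m i)) \<and> (\<forall>i\<ge>t. A i = undefined)}"

definition prod_mult :: "nat \<Rightarrow> (nat \<Rightarrow> nat) \<Rightarrow> (nat \<Rightarrow> ('a, 'b) ring_scheme) \<Rightarrow> (nat \<Rightarrow> nat \<Rightarrow> nat \<Rightarrow> 'a) \<Rightarrow> (nat \<Rightarrow> nat \<Rightarrow> nat \<Rightarrow> 'a) \<Rightarrow> (nat \<Rightarrow> nat \<Rightarrow> nat \<Rightarrow> 'a)" where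
  "prod_mult t m F A B = (\<lambda>i. if i < t then mat_mult (F i) (m i) (A i) (B i) else undefined)"

definition prod_zero :: "nat \<Rightarrow> (nat \<Rightarrow> nat) \<Rightarrow> (nat \<Rightarrow> ('a, 'b) ring_scheme) \<Rightarrow> (nat \<Rightarrow> nat \<Rightarrow> nat \<Rightarrow> 'a)" where
  "prod_zero t m F = (\<lambda>i. if i < t then mat_zero (F i) (m i) else undefined)"

definition left_ideal :: "nat \<Rightarrow> (nat \<Rightarrow> nat) \<Rightarrow> (nat \<Rightarrow> ('a, 'b) ring_scheme) \<Rightarrow> (nat \<Rightarrow> nat \<Rightarrow> nat \<Rightarrow> 'a) \<Rightarrow> (nat \<Rightarrow> nat \<Rightarrow> nat \<Rightarrow> 'a) set" where
  "left_ideal t m F x = {prod_mult t m F r x | r. r \<in> prod_carrier t m F}"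

definition is_norm_hom_weight :: "nat \<Rightarrow> (nat \<Rightarrow> nat) \<Rightarrow> (nat \<Rightarrow> ('a, 'b) ring_scheme) \<Rightarrow> ((nat \<Rightarrow> nat \<Rightarrow> nat \<Rightarrow> 'a) \<Rightarrow> real) \<Rightarrow> bool" where
  "is_norm_hom_weight t m F \<omega> \<longleftrightarrow>
     \<omega> (prod_zero t m F) = 0 \<and>
     (\<forall>x\<in>prod_carrier t m F. \<forall>y\<in>prod_carrier t m F.
        left_ideal t m F x = left_ideal t m F y \<longrightarrow> \<omega> x = \<omega> y) \<and>
     (\<forall>x\<in>prod_carrier t m F. x \<noteq> prod_zero t m F \<longrightarrow>
        (\<Sum>y\<in>left_ideal t m F x. \<omega> y) = real (card (left_ideal t m F x)))"

definition alpha_poly :: "real \<Rightarrow> nat \<Rightarrow> real \<Rightarrow> real" where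
  "alpha_poly q r x = (\<Prod>j<r. (x - q ^ j))"

definition hom_weight_formula :: "nat \<Rightarrow> (nat \<Rightarrow> nat) \<Rightarrow> (nat \<Rightarrow> ('a, 'b) ring_scheme) \<Rightarrow> (nat \<Rightarrow> nat \<Rightarrow> nat \<Rightarrow> 'a) \<Rightarrow> real" where
  "hom_weight_formula t m F A =
     1 - (\<Prod>i<t. let q = real (card (carrier (F i))); r = mat_rank (F i) (m i) (A i) in
            ((-1) ^ r * q ^ (r choose 2)) / alpha_poly q r (q ^ m i))"

end

theory Submission imports Defs begin

lemma (in abelian_monoid) finsum_swap:
  assumes "finite A" "finite B" "\<And>i j. i\<in>A \<Longrightarrow> j\<in>B \<Longrightarrow> f i j \<in> carrier G"
  shows "(\<Oplus>i\<in>A. \<Oplus>j\<in>B. f i j) = (\<Oplus>j\<in>B. \<Oplus>i\<in>A. f i j)"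
  using assms(1,3)
proof (induct A)
  case empty
  then show ?case by (simp add: finsum_zero)
next
  case (insert a A)
  have "(\<Oplus>i\<in>insert a A. \<Oplus>j\<in>B. f i j) = (\<Oplus>j\<in>B. f a j) \<oplus> (\<Oplus>i\<in>A. \<Oplus>j\<in>B. f i j)"
    using insert assms(2) by (intro finsum_insert) (auto intro!: finsum_closed)
  also have "\<dots> = (\<Oplus>j\<in>B. f a j) \<oplus> (\<Oplus>j\<in>B. \<Oplus>i\<in>A. f i j)"
    using insert by simp
  also have "\<dots> = (\<Oplus>j\<in>B. f a j \<oplus> (\<Oplus>i\<in>A. f i j))"
    using insert assms(2) by (intro finsum_addf[symmetric]) (auto intro!: finsum_closed)
  also have "\<dots> = (\<Oplus>j\<in>B. \<Oplus>i\<in>insert a A. f i j)"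
    using insert assms(2) by (intro finsum_cong') (auto simp: finsum_insert intro!: finsum_closed)
  finally show ?case .
qed

lemma (in abelian_group) finsum_diff:
  assumes "finite A" "\<And>i. i\<in>A \<Longrightarrow> f i \<in> carrier G" "\<And>i. i\<in>A \<Longrightarrow> g i \<in> carrier G"
  shows "(\<Oplus>i\<in>A. f i \<ominus> g i) = (\<Oplus>i\<in>A. f i) \<ominus> (\<Oplus>i\<in>A. g i)"
  using assms
proof (induct A)
  case empty
  then show ?case by (simp add: a_minus_def) (metis l_neg r_zero zero_closed a_inv_closed)
next
  case (insert a A)
  have "(\<Oplus>i\<in>insert a A. f i \<ominus> g i) = (f a \<ominus> g a) \<oplus> (\<Oplus>i\<in>A. f i \<ominus> g i)"
    using insert by (intro finsum_insert) auto
  also have "\<dots> = (f a \<ominus> g a) \<oplus> ((\<Oplus>i\<in>A. f i) \<ominus> (\<Oplus>i\<in>A. g i))"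
    using insert by simp
  also have "\<dots> = (f a \<oplus> (\<Oplus>i\<in>A. f i)) \<ominus> (g a \<oplus> (\<Oplus>i\<in>A. g i))"
    using insert by (simp add: a_minus_def minus_add a_ac finsum_closed)
  also have "\<dots> = (\<Oplus>i\<in>insert a A. f i) \<ominus> (\<Oplus>i\<in>insert a A. g i)"
    using insert by (simp add: finsum_insert)
  finally show ?case .
qed

definition vecs :: "('a,'b) ring_scheme \<Rightarrow> 'c set \<Rightarrow> ('c \<Rightarrow> 'a) set" where
  "vecs K D = PiE D (\<lambda>_. carrier K)"

definition lc :: "('a,'b) ring_scheme \<Rightarrow> 'c set \<Rightarrow> 'k set \<Rightarrow> ('k \<Rightarrow> 'a) \<Rightarrow> ('k \<Rightarrow> 'c \<Rightarrow> 'a) \<Rightarrow> ('c \<Rightarrow> 'a)" where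
  "lc K D S c w = (\<lambda>j. if j \<in> D then finsum K (\<lambda>k. c k \<otimes>\<^bsub>K\<^esub> w k j) S else undefined)"

definition span :: "('a,'b) ring_scheme \<Rightarrow> 'c set \<Rightarrow> 'k set \<Rightarrow> ('k \<Rightarrow> 'c \<Rightarrow> 'a) \<Rightarrow> ('c \<Rightarrow> 'a) set" where
  "span K D S w = (\<lambda>c. lc K D S c w) ` (PiE S (\<lambda>_. carrier K))"

definition indep :: "('a,'b) ring_scheme \<Rightarrow> 'c set \<Rightarrow> ('k \<Rightarrow> 'c \<Rightarrow> 'a) \<Rightarrow> 'k set \<Rightarrow> bool" where
  "indep K D w S \<longleftrightarrow> (\<forall>c. (\<forall>k\<in>S. c k \<in> carrier K) \<longrightarrow>
          (\<forall>j\<in>D. finsum K (\<lambda>k. c k \<otimes>\<^bsub>K\<^esub> w k j) S = \<zero>\<^bsub>K\<^esub>) \<longrightarrow>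
          (\<forall>k\<in>S. c k = \<zero>\<^bsub>K\<^esub>))"

definition rk :: "('a,'b) ring_scheme \<Rightarrow> 'c set \<Rightarrow> ('k \<Rightarrow> 'c \<Rightarrow> 'a) \<Rightarrow> 'k set \<Rightarrow> nat" where
  "rk K D w S0 = Max {card S | S. S \<subseteq> S0 \<and> indep K D w S}"

locale ffield = field + assumes fin_carrier: "finite (carrier R)"

context ffield
begin

abbreviation "q \<equiv> card (carrier R)"

lemma q_ge2: "2 \<le> q"
proof -
  have "{\<zero>, \<one>} \<subseteq> carrier R" by auto
  then have "card {\<zero>, \<one>} \<le> q" using fin_carrier by (rule card_mono[rotated])
  then show ?thesis by simp
qed

lemma card_vecs: "finite D \<Longrightarrow> card (vecs R D) = q ^ card D"
  by (simp add: vecs_def card_PiE)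

lemma finite_vecs: "finite D \<Longrightarrow> finite (vecs R D)"
  by (simp add: vecs_def finite_PiE fin_carrier)

lemma lc_closed:
  assumes "finite S" "\<And>k. k\<in>S \<Longrightarrow> c k \<in> carrier R" "\<And>k j. k\<in>S \<Longrightarrow> j\<in>D \<Longrightarrow> w k j \<in> carrier R"
  shows "lc R D S c w \<in> vecs R D"
  using assms unfolding lc_def vecs_def by (auto intro!: finsum_closed)

lemma lc_apply: "j \<in> D \<Longrightarrow> lc R D S c w j = (\<Oplus>k\<in>S. c k \<otimes> w k j)"
  by (simp add: lc_def)

lemma span_vecs:
  assumes "finite S" "\<And>k j. k\<in>S \<Longrightarrow> j\<in>D \<Longrightarrow> w k j \<in> carrier R"
  shows "span R D S w \<subseteq> vecs R D"
  using assms unfolding span_def by (auto intro!: lc_closed simp: PiE_iff)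

lemma finsum_cong_simple:
  assumes "\<And>k. k\<in>S \<Longrightarrow> f k = g k" "\<And>k. k\<in>S \<Longrightarrow> g k \<in> carrier R"
  shows "finsum R f S = finsum R g S"
  using assms by (intro finsum_cong') auto

lemma lc_cong:
  assumes "\<And>k. k\<in>S \<Longrightarrow> c k = c' k" "\<And>k j. k\<in>S \<Longrightarrow> j\<in>D \<Longrightarrow> w k j = w' k j"
    "\<And>k. k\<in>S \<Longrightarrow> c' k \<in> carrier R" "\<And>k j. k\<in>S \<Longrightarrow> j\<in>D \<Longrightarrow> w' k j \<in> carrier R"
  shows "lc R D S c w = lc R D S c' w'"
  unfolding lc_def using assms by (intro ext) (auto intro!: finsum_cong_simple)

lemma span_cong:
  assumes "\<And>k j. k\<in>S \<Longrightarrow> j\<in>D \<Longrightarrow> w k j = w' k j"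
    "\<And>k j. k\<in>S \<Longrightarrow> j\<in>D \<Longrightarrow> w' k j \<in> carrier R"
  shows "span R D S w = span R D S w'"
  unfolding span_def using assms by (intro image_cong refl lc_cong) (auto simp: PiE_iff)

lemma indep_cong:
  assumes "\<And>k j. k\<in>S \<Longrightarrow> j\<in>D \<Longrightarrow> w k j = w' k j"
    "\<And>k j. k\<in>S \<Longrightarrow> j\<in>D \<Longrightarrow> w' k j \<in> carrier R"
  shows "indep R D w S = indep R D w' S"
proof -
  have "\<And>c j. (\<forall>k\<in>S. c k \<in> carrier R) \<Longrightarrow> j \<in> D \<Longrightarrow>
     finsum R (\<lambda>k. c k \<otimes> w k j) S = finsum R (\<lambda>k. c k \<otimes> w' k j) S"
    using assms by (intro finsum_cong_simple) auto
  then show ?thesis unfolding indep_def by auto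
qed

lemma indep_subset:
  assumes "indep R D w T" "S \<subseteq> T" "finite T" "\<And>k j. k\<in>T \<Longrightarrow> j\<in>D \<Longrightarrow> w k j \<in> carrier R"
  shows "indep R D w S"
  unfolding indep_def
proof (intro allI impI ballI)
  fix c k
  assume c: "\<forall>k\<in>S. c k \<in> carrier R" and z: "\<forall>j\<in>D. (\<Oplus>k\<in>S. c k \<otimes> w k j) = \<zero>" and k: "k \<in> S"
  define c' where "c' = (\<lambda>k. if k \<in> S then c k else \<zero>)"
  have "\<forall>j\<in>D. (\<Oplus>k\<in>T. c' k \<otimes> w k j) = \<zero>"
  proof
    fix j assume j: "j \<in> D"
    have "(\<Oplus>k\<in>S. c k \<otimes> w k j) = (\<Oplus>k\<in>T. c' k \<otimes> w k j)"
      using assms c j by (intro add.finprod_mono_neutral_cong_left) (auto simp: c'_def)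
    then show "(\<Oplus>k\<in>T. c' k \<otimes> w k j) = \<zero>" using z j by simp
  qed
  moreover have "\<forall>k\<in>T. c' k \<in> carrier R" using c by (auto simp: c'_def)
  ultimately have "\<forall>k\<in>T. c' k = \<zero>" using assms(1) unfolding indep_def by blast
  then show "c k = \<zero>" using k assms(2) unfolding c'_def by (metis subsetD)
qed

lemma indep_empty: "indep R D w {}"
  by (simp add: indep_def)

lemma rk_facts:
  assumes "finite S0"
  shows "\<exists>S. S \<subseteq> S0 \<and> indep R D w S \<and> card S = rk R D w S0"
    and "\<And>S. S \<subseteq> S0 \<Longrightarrow> indep R D w S \<Longrightarrow> card S \<le> rk R D w S0"
    and "rk R D w S0 \<le> card S0"
proof -
  let ?A = "{card S | S. S \<subseteq> S0 \<and> indep R D w S}"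
  have fin: "finite ?A"
  proof (rule finite_subset)
    show "?A \<subseteq> card ` Pow S0" by auto
  qed (use assms in auto)
  have ne: "?A \<noteq> {}" using indep_empty by blast
  show "\<exists>S. S \<subseteq> S0 \<and> indep R D w S \<and> card S = rk R D w S0"
    using Max_in[OF fin ne] unfolding rk_def by auto
  show "\<And>S. S \<subseteq> S0 \<Longrightarrow> indep R D w S \<Longrightarrow> card S \<le> rk R D w S0"
    unfolding rk_def using fin by (intro Max_ge) auto
  have "\<forall>a\<in>?A. a \<le> card S0" using assms by (auto intro: card_mono)
  then show "rk R D w S0 \<le> card S0" unfolding rk_def using fin ne by auto
qed

lemma rk_cong:
  assumes "\<And>k j. k\<in>S0 \<Longrightarrow> j\<in>D \<Longrightarrow> w k j = w' k j"
    "\<And>k j. k\<in>S0 \<Longrightarrow> j\<in>D \<Longrightarrow> w' k j \<in> carrier R"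
  shows "rk R D w S0 = rk R D w' S0"
proof -
  have "\<And>S. S \<subseteq> S0 \<Longrightarrow> indep R D w S = indep R D w' S"
    using assms by (intro indep_cong) auto
  then have "{card S | S. S \<subseteq> S0 \<and> indep R D w S} = {card S | S. S \<subseteq> S0 \<and> indep R D w' S}"
    by blast
  then show ?thesis unfolding rk_def by simp
qed

end

context ffield
begin

lemma vecs_mem: "v \<in> vecs R D \<Longrightarrow> j \<in> D \<Longrightarrow> v j \<in> carrier R"
  by (auto simp: vecs_def)

lemma vecs_out: "v \<in> vecs R D \<Longrightarrow> j \<notin> D \<Longrightarrow> v j = undefined"
  by (auto simp: vecs_def PiE_def extensional_def)

lemma self_in_span:
  assumes "finite S" "k \<in> S" "w k \<in> vecs R D"
    "\<And>k j. k\<in>S \<Longrightarrow> j\<in>D \<Longrightarrow> w k j \<in> carrier R"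
  shows "w k \<in> span R D S w"
proof -
  define d where "d = restrict (\<lambda>i. if i = k then \<one> else \<zero>) S"
  have dP: "d \<in> PiE S (\<lambda>_. carrier R)" by (auto simp: d_def)
  have "lc R D S d w = w k"
  proof (rule ext)
    fix j show "lc R D S d w j = w k j"
    proof (cases "j \<in> D")
      case True
      have "(\<Oplus>i\<in>S. d i \<otimes> w i j) = (\<Oplus>i\<in>S. if k = i then w i j else \<zero>)"
      proof (rule finsum_cong')
        show "(\<lambda>i. if k = i then w i j else \<zero>) \<in> S \<rightarrow> carrier R" using assms(4) True by auto
        fix i assume i: "i \<in> S"
        show "d i \<otimes> w i j = (if k = i then w i j else \<zero>)"
          using assms(4)[OF i True] i by (auto simp: d_def)
      qed simp
      also have "\<dots> = w k j"
      proof (rule finsum_singleton)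
        show "(\<lambda>i. w i j) \<in> S \<rightarrow> carrier R" using assms(4) True by auto
      qed (use assms in auto)
      finally show ?thesis using True by (simp add: lc_def)
    next
      case False then show ?thesis using assms(3) by (simp add: lc_def vecs_out)
    qed
  qed
  then show ?thesis using dP unfolding span_def by (rule rev_image_eqI[rotated, OF sym])
qed

lemma insert_dep:
  assumes "finite S" "b \<notin> S" "w b \<in> vecs R D" "\<And>k j. k\<in>S \<Longrightarrow> j\<in>D \<Longrightarrow> w k j \<in> carrier R"
    "\<And>k. k \<in> insert b S \<Longrightarrow> c k \<in> carrier R" "c b \<noteq> \<zero>"
    "\<And>j. j\<in>D \<Longrightarrow> (\<Oplus>k\<in>insert b S. c k \<otimes> w k j) = \<zero>"
  shows "w b \<in> span R D S w"
proof -
  have cbc: "c b \<in> carrier R" using assms(5) by auto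
  have cb: "c b \<in> Units R" using cbc assms(6) field_Units by auto
  have ic: "inv (c b) \<in> carrier R" using cb by auto
  have icb: "inv (c b) \<otimes> c b = \<one>" using cb by simp
  have cS: "\<And>k. k\<in>S \<Longrightarrow> c k \<in> carrier R" using assms(5) by auto
  define e where "e = restrict (\<lambda>k. (\<ominus> (inv (c b))) \<otimes> c k) S"
  have e: "e \<in> PiE S (\<lambda>_. carrier R)" using ic cS by (auto simp: e_def)
  have "lc R D S e w = w b"
  proof (rule ext)
    fix j show "lc R D S e w j = w b j"
    proof (cases "j \<in> D")
      case True
      have wbj: "w b j \<in> carrier R" using assms(3) True by (rule vecs_mem)
      have Pi1: "(\<lambda>k. c k \<otimes> w k j) \<in> S \<rightarrow> carrier R" using cS assms(4) True by auto
      have s: "(\<Oplus>k\<in>S. c k \<otimes> w k j) \<in> carrier R" using Pi1 by (rule finsum_closed)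
      have "(\<Oplus>k\<in>insert b S. c k \<otimes> w k j) = c b \<otimes> w b j \<oplus> (\<Oplus>k\<in>S. c k \<otimes> w k j)"
        using assms(1,2) Pi1 cbc wbj by (intro finsum_insert) auto
      then have "c b \<otimes> w b j \<oplus> (\<Oplus>k\<in>S. c k \<otimes> w k j) = \<zero>"
        using assms(7)[OF True] by simp
      hence eq: "(\<Oplus>k\<in>S. c k \<otimes> w k j) \<oplus> c b \<otimes> w b j = \<zero>" using s cbc wbj by (simp add: a_comm)
      have "lc R D S e w j = (\<Oplus>k\<in>S. e k \<otimes> w k j)" using True by (simp add: lc_def)
      also have "\<dots> = (\<Oplus>k\<in>S. (\<ominus> (inv (c b))) \<otimes> (c k \<otimes> w k j))"
      proof (rule finsum_cong')
        show "(\<lambda>k. (\<ominus> (inv (c b))) \<otimes> (c k \<otimes> w k j)) \<in> S \<rightarrow> carrier R"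
          using Pi1 ic by auto
        fix k assume k: "k \<in> S"
        show "e k \<otimes> w k j = (\<ominus> (inv (c b))) \<otimes> (c k \<otimes> w k j)"
          using k cS[OF k] ic assms(4)[OF k True] by (simp add: e_def m_assoc)
      qed simp
      also have "\<dots> = (\<ominus> (inv (c b))) \<otimes> (\<Oplus>k\<in>S. c k \<otimes> w k j)"
        using ic Pi1 assms(1) by (intro finsum_rdistr[symmetric]) auto
      also have "\<dots> = w b j"
      proof -
        have "(\<Oplus>k\<in>S. c k \<otimes> w k j) = \<ominus> (c b \<otimes> w b j)"
          using eq s cbc wbj by (intro minus_equality[symmetric]) auto
        then have "(\<ominus> (inv (c b))) \<otimes> (\<Oplus>k\<in>S. c k \<otimes> w k j) = inv (c b) \<otimes> (c b \<otimes> w b j)"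
          using ic cbc wbj by (simp add: l_minus r_minus minus_minus)
        also have "\<dots> = w b j" using ic cbc wbj icb by (simp add: m_assoc[symmetric])
        finally show ?thesis .
      qed
      finally show ?thesis .
    next
      case False then show ?thesis using assms(3) by (simp add: lc_def vecs_out)
    qed
  qed
  then show ?thesis using e unfolding span_def by (rule rev_image_eqI[rotated, OF sym])
qed

lemma finsum_ldistr_assoc:
  assumes "finite T" "a \<in> carrier R" "\<And>k. k\<in>T \<Longrightarrow> d k \<in> carrier R" "\<And>k. k\<in>T \<Longrightarrow> e k \<in> carrier R"
  shows "(\<Oplus>k\<in>T. d k \<otimes> e k) \<otimes> a = (\<Oplus>k\<in>T. d k \<otimes> (e k \<otimes> a))"
proof -
  have "(\<Oplus>k\<in>T. d k \<otimes> e k) \<otimes> a = (\<Oplus>k\<in>T. d k \<otimes> e k \<otimes> a)"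
    using assms by (intro finsum_ldistr) auto
  also have "\<dots> = (\<Oplus>k\<in>T. d k \<otimes> (e k \<otimes> a))"
    using assms by (intro finsum_cong') (auto simp: m_assoc)
  finally show ?thesis .
qed

lemma span_trans:
  assumes fS: "finite S" and fT: "finite T"
    and wc: "\<And>k j. k\<in>S \<Longrightarrow> j\<in>D \<Longrightarrow> w k j \<in> carrier R"
    and vin: "\<And>k. k\<in>T \<Longrightarrow> v k \<in> span R D S w"
  shows "span R D T v \<subseteq> span R D S w"
proof
  fix u assume "u \<in> span R D T v"
  then obtain d where d: "d \<in> PiE T (\<lambda>_. carrier R)" and u: "u = lc R D T d v"
    unfolding span_def by auto
  have dc: "\<And>k. k\<in>T \<Longrightarrow> d k \<in> carrier R" using d by auto
  have "\<forall>k\<in>T. \<exists>e. e \<in> PiE S (\<lambda>_. carrier R) \<and> v k = lc R D S e w"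
    using vin unfolding span_def by blast
  then obtain e where e: "\<And>k. k\<in>T \<Longrightarrow> e k \<in> PiE S (\<lambda>_. carrier R)"
    and ve: "\<And>k. k\<in>T \<Longrightarrow> v k = lc R D S (e k) w" by metis
  have ec: "\<And>k s. k\<in>T \<Longrightarrow> s\<in>S \<Longrightarrow> e k s \<in> carrier R" using e by auto
  define c where "c = restrict (\<lambda>s. \<Oplus>k\<in>T. d k \<otimes> e k s) S"
  have c: "c \<in> PiE S (\<lambda>_. carrier R)" using dc ec fT by (auto simp: c_def intro!: finsum_closed)
  have "lc R D T d v = lc R D S c w"
  proof (rule ext)
    fix j show "lc R D T d v j = lc R D S c w j"
    proof (cases "j\<in>D")
      case True
      have "(\<Oplus>k\<in>T. d k \<otimes> v k j) = (\<Oplus>k\<in>T. d k \<otimes> (\<Oplus>s\<in>S. e k s \<otimes> w s j))"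
        using ve True dc ec wc fS by (intro finsum_cong') (auto simp: lc_def intro!: finsum_closed)
      also have "\<dots> = (\<Oplus>k\<in>T. \<Oplus>s\<in>S. d k \<otimes> (e k s \<otimes> w s j))"
        using True dc ec wc fS by (intro finsum_cong' finsum_rdistr) (auto intro!: finsum_closed)
      also have "\<dots> = (\<Oplus>s\<in>S. \<Oplus>k\<in>T. d k \<otimes> (e k s \<otimes> w s j))"
        using True dc ec wc fS fT by (intro finsum_swap) auto
      also have "\<dots> = (\<Oplus>s\<in>S. (\<Oplus>k\<in>T. d k \<otimes> e k s) \<otimes> w s j)"
        using True dc ec wc fS fT
        by (intro finsum_cong') (auto simp: finsum_ldistr_assoc intro!: finsum_closed)
      also have "\<dots> = (\<Oplus>s\<in>S. c s \<otimes> w s j)"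
        using True dc ec wc fS fT by (intro finsum_cong') (auto simp: c_def intro!: finsum_closed)
      finally show ?thesis using True by (simp add: lc_def)
    next
      case False then show ?thesis by (simp add: lc_def)
    qed
  qed
  then show "u \<in> span R D S w" using c u unfolding span_def by auto
qed

lemma card_span_indep:
  assumes "finite S" "indep R D w S" "\<And>k j. k\<in>S \<Longrightarrow> j\<in>D \<Longrightarrow> w k j \<in> carrier R"
  shows "card (span R D S w) = q ^ card S"
proof -
  have "inj_on (\<lambda>c. lc R D S c w) (PiE S (\<lambda>_. carrier R))"
  proof (rule inj_onI)
    fix c c' assume c: "c \<in> PiE S (\<lambda>_. carrier R)" and c': "c' \<in> PiE S (\<lambda>_. carrier R)"
      and eq: "lc R D S c w = lc R D S c' w"
    have cc: "\<And>k. k\<in>S \<Longrightarrow> c k \<in> carrier R" "\<And>k. k\<in>S \<Longrightarrow> c' k \<in> carrier R" using c c' by auto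
    define d where "d = (\<lambda>k. c k \<ominus> c' k)"
    have "\<forall>j\<in>D. (\<Oplus>k\<in>S. d k \<otimes> w k j) = \<zero>"
    proof
      fix j assume j: "j \<in> D"
      have "(\<Oplus>k\<in>S. d k \<otimes> w k j) = (\<Oplus>k\<in>S. c k \<otimes> w k j \<ominus> c' k \<otimes> w k j)"
      proof (rule finsum_cong')
        show "(\<lambda>k. c k \<otimes> w k j \<ominus> c' k \<otimes> w k j) \<in> S \<rightarrow> carrier R" using cc assms(3) j by auto
        fix k assume k: "k \<in> S"
        have a: "c k \<in> carrier R" "c' k \<in> carrier R" "w k j \<in> carrier R" using cc k assms(3) j by auto
        show "d k \<otimes> w k j = c k \<otimes> w k j \<ominus> c' k \<otimes> w k j"
          unfolding d_def a_minus_def using a by (simp add: l_distr l_minus)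
      qed simp
      also have "\<dots> = (\<Oplus>k\<in>S. c k \<otimes> w k j) \<ominus> (\<Oplus>k\<in>S. c' k \<otimes> w k j)"
        using cc assms j by (intro finsum_diff) auto
      also have "\<dots> = lc R D S c' w j \<ominus> lc R D S c' w j"
        using eq j by (simp add: lc_apply[symmetric])
      also have "\<dots> = \<zero>"
      proof -
        have "lc R D S c' w \<in> vecs R D" by (rule lc_closed) (use cc assms in auto)
        then have "lc R D S c' w j \<in> carrier R" using j by (rule vecs_mem)
        then show ?thesis by (simp add: r_neg minus_eq)
      qed
      finally show "(\<Oplus>k\<in>S. d k \<otimes> w k j) = \<zero>" .
    qed
    moreover have "\<forall>k\<in>S. d k \<in> carrier R" using cc by (auto simp: d_def)
    ultimately have dz: "\<forall>k\<in>S. d k = \<zero>" using assms(2) unfolding indep_def by blast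
    have "\<And>k. k \<in> S \<Longrightarrow> c k = c' k"
    proof -
      fix k assume k: "k \<in> S"
      have "c k \<ominus> c' k = \<zero>" using dz k by (simp add: d_def)
      then show "c k = c' k" using cc[of k] k
        by (metis a_minus_def add.inv_closed add.inv_solve_right l_zero zero_closed)
    qed
    then show "c = c'" using c c' by (intro PiE_ext[of c S _ c']) auto
  qed
  then have "card (span R D S w) = card (PiE S (\<lambda>_. carrier R))" unfolding span_def by (rule card_image)
  also have "\<dots> = q ^ card S" using assms(1) by (simp add: card_PiE)
  finally show ?thesis .
qed

lemma card_span_le:
  assumes "finite S"
  shows "card (span R D S w) \<le> q ^ card S"
proof -
  have "card (span R D S w) \<le> card (PiE S (\<lambda>_. carrier R))" unfolding span_def
    by (rule card_image_le) (use assms fin_carrier in \<open>simp add: finite_PiE\<close>)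
  also have "\<dots> = q ^ card S" using assms(1) by (simp add: card_PiE)
  finally show ?thesis .
qed

lemma indep_card_le:
  assumes fS: "finite S" and fT: "finite T" and fD: "finite D" and ind: "indep R D v T"
   and vc: "\<And>k j. k\<in>T \<Longrightarrow> j\<in>D \<Longrightarrow> v k j \<in> carrier R"
   and wc: "\<And>k j. k\<in>S \<Longrightarrow> j\<in>D \<Longrightarrow> w k j \<in> carrier R"
   and vin: "\<And>k. k\<in>T \<Longrightarrow> v k \<in> span R D S w"
  shows "card T \<le> card S"
proof -
  have sub: "span R D T v \<subseteq> span R D S w" using fS fT wc vin by (rule span_trans)
  have "span R D S w \<subseteq> vecs R D" using fS wc by (rule span_vecs)
  then have "finite (span R D S w)" using finite_vecs[OF fD] by (rule finite_subset)
  then have "card (span R D T v) \<le> card (span R D S w)" using sub by (rule card_mono)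
  moreover have "card (span R D T v) = q ^ card T" using fT ind vc by (rule card_span_indep)
  moreover have "card (span R D S w) \<le> q ^ card S" using fS by (rule card_span_le)
  ultimately have "q ^ card T \<le> q ^ card S" by (metis le_trans)
  moreover have "1 < q" using q_ge2 by simp
  ultimately show ?thesis using power_le_imp_le_exp by blast
qed

lemma span_max:
  assumes fS0: "finite S0" and SS0: "S \<subseteq> S0" and indS: "indep R D w S"
    and cardS: "card S = rk R D w S0" and k0: "k \<in> S0"
    and wv: "\<And>k. k\<in>S0 \<Longrightarrow> w k \<in> vecs R D"
  shows "w k \<in> span R D S w"
proof -
  have fS: "finite S" using fS0 SS0 by (rule finite_subset[rotated])
  have wc: "\<And>k j. k\<in>S0 \<Longrightarrow> j\<in>D \<Longrightarrow> w k j \<in> carrier R"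
    by (rule vecs_mem[OF wv])
  have wcS: "\<And>k j. k\<in>S \<Longrightarrow> j\<in>D \<Longrightarrow> w k j \<in> carrier R" using wc SS0 by blast
  show ?thesis
  proof (cases "k \<in> S")
    case True
    note kS = this
    show ?thesis by (rule self_in_span[where w=w and D=D, OF fS kS wv[OF k0] wcS])
  next
    case False
    note kS = False
    have "\<not> indep R D w (insert k S)"
    proof
      assume "indep R D w (insert k S)"
      moreover have "insert k S \<subseteq> S0" using SS0 k0 by blast
      ultimately have "card (insert k S) \<le> rk R D w S0" by (intro rk_facts(2)[OF fS0])
      moreover have "card (insert k S) = Suc (card S)" using kS fS by simp
      ultimately show False using cardS by linarith
    qed
    then obtain c where c: "\<forall>i\<in>insert k S. c i \<in> carrier R"
      and z: "\<forall>j\<in>D. (\<Oplus>i\<in>insert k S. c i \<otimes> w i j) = \<zero>" and nz: "\<exists>i\<in>insert k S. c i \<noteq> \<zero>"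
      unfolding indep_def by blast
    show ?thesis
    proof (cases "c k = \<zero>")
      case True
      have "\<forall>j\<in>D. (\<Oplus>i\<in>S. c i \<otimes> w i j) = \<zero>"
      proof
        fix j assume j: "j\<in>D"
        have Pi1: "(\<lambda>i. c i \<otimes> w i j) \<in> S \<rightarrow> carrier R" using c wcS j by auto
        have s: "(\<Oplus>i\<in>S. c i \<otimes> w i j) \<in> carrier R" using Pi1 by (rule finsum_closed)
        have wkj: "w k j \<in> carrier R" using wc k0 j by blast
        have "(\<Oplus>i\<in>insert k S. c i \<otimes> w i j) = c k \<otimes> w k j \<oplus> (\<Oplus>i\<in>S. c i \<otimes> w i j)"
          using fS kS Pi1 c wkj by (intro finsum_insert) auto
        also have "\<dots> = (\<Oplus>i\<in>S. c i \<otimes> w i j)" using True wkj s by simp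
        finally show "(\<Oplus>i\<in>S. c i \<otimes> w i j) = \<zero>" using z j by simp
      qed
      then have "\<forall>i\<in>S. c i = \<zero>" using indS c unfolding indep_def by blast
      then show ?thesis using nz True by blast
    next
      case False
      show ?thesis
      proof (rule insert_dep[where c=c])
        show "finite S" by (fact fS)
        show "k \<notin> S" by (fact kS)
        show "w k \<in> vecs R D" by (rule wv[OF k0])
        show "\<And>i j. i\<in>S \<Longrightarrow> j\<in>D \<Longrightarrow> w i j \<in> carrier R" by (rule wcS)
        show "\<And>i. i \<in> insert k S \<Longrightarrow> c i \<in> carrier R" using c by blast
        show "c k \<noteq> \<zero>" by (fact False)
        show "\<And>j. j \<in> D \<Longrightarrow> (\<Oplus>k\<in>insert k S. c k \<otimes> w k j) = \<zero>" using z by blast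
      qed
    qed
  qed
qed

lemma rk_span:
  assumes "finite S0" "finite D" "S1 \<subseteq> S0" "\<And>k. k\<in>S0 \<Longrightarrow> w k \<in> vecs R D"
    "\<And>k. k\<in>S0 \<Longrightarrow> w k \<in> span R D S1 w"
  shows "rk R D w S0 = rk R D w S1"
proof (rule antisym)
  have fS1: "finite S1" using assms(1,3) by (rule finite_subset[rotated])
  have wc: "\<And>k j. k\<in>S0 \<Longrightarrow> j\<in>D \<Longrightarrow> w k j \<in> carrier R" 
    by (rule vecs_mem[OF assms(4)])
  obtain T where T: "T \<subseteq> S0" "indep R D w T" "card T = rk R D w S0" using rk_facts(1)[OF assms(1)] by blast
  obtain S' where S': "S' \<subseteq> S1" "indep R D w S'" "card S' = rk R D w S1" using rk_facts(1)[OF fS1] by blast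
  have fS': "finite S'" using fS1 S'(1) by (rule finite_subset[rotated])
  have fT: "finite T" using assms(1) T(1) by (rule finite_subset[rotated])
  have wcS': "\<And>k j. k\<in>S' \<Longrightarrow> j\<in>D \<Longrightarrow> w k j \<in> carrier R" using wc S'(1) assms(3) by blast
  have wcT: "\<And>k j. k\<in>T \<Longrightarrow> j\<in>D \<Longrightarrow> w k j \<in> carrier R" using wc T(1) by blast
  have wv1: "\<And>k. k\<in>S1 \<Longrightarrow> w k \<in> vecs R D" using assms(3,4) by blast
  have "\<And>k. k\<in>S1 \<Longrightarrow> w k \<in> span R D S' w"
    using fS1 S'(1) S'(2) S'(3) _ wv1 by (rule span_max)
  then have sub: "span R D S1 w \<subseteq> span R D S' w"
    using fS' fS1 wcS' by (intro span_trans) auto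
  have "\<And>k. k\<in>T \<Longrightarrow> w k \<in> span R D S' w" using sub assms(5) T(1) by blast
  then have "card T \<le> card S'"
    using fS' fT assms(2) T(2) wcT wcS' by (intro indep_card_le[where v=w and w=w])
  then show "rk R D w S0 \<le> rk R D w S1" using T S' by simp
  have "card S' \<le> rk R D w S0" using S'(1) assms(3) S'(2) by (intro rk_facts(2)[OF assms(1)]) auto
  then show "rk R D w S1 \<le> rk R D w S0" using S'(3) by simp
qed

lemma span_eq_max:
  assumes "finite S0" "S \<subseteq> S0" "indep R D w S" "card S = rk R D w S0"
    "\<And>k. k\<in>S0 \<Longrightarrow> w k \<in> vecs R D"
  shows "span R D S0 w = span R D S w"
proof
  have fS: "finite S" using assms(1,2) by (rule finite_subset[rotated])
  have wc: "\<And>k j. k\<in>S0 \<Longrightarrow> j\<in>D \<Longrightarrow> w k j \<in> carrier R" 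
    by (rule vecs_mem[OF assms(5)])
  show "span R D S0 w \<subseteq> span R D S w"
    by (rule span_trans) (use assms fS wc in \<open>auto intro!: span_max[of S0]\<close>)
  show "span R D S w \<subseteq> span R D S0 w"
    by (rule span_trans) (use assms fS wc in \<open>auto intro!: self_in_span\<close>)
qed

lemma card_span_rk:
  assumes "finite S0" "\<And>k. k\<in>S0 \<Longrightarrow> w k \<in> vecs R D"
  shows "card (span R D S0 w) = q ^ rk R D w S0"
proof -
  obtain S where S: "S \<subseteq> S0" "indep R D w S" "card S = rk R D w S0" using rk_facts(1)[OF assms(1)] by blast
  have fS: "finite S" using assms(1) S(1) by (rule finite_subset[rotated])
  have wc: "\<And>k j. k\<in>S0 \<Longrightarrow> j\<in>D \<Longrightarrow> w k j \<in> carrier R" 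
    by (rule vecs_mem[OF assms(2)])
  have "span R D S0 w = span R D S w" using span_eq_max S assms by blast
  then show ?thesis using card_span_indep[OF fS S(2)] wc S by auto
qed

lemma rk_insert_in:
  assumes "finite S0" "finite D" "b \<notin> S0" "\<And>k. k \<in> insert b S0 \<Longrightarrow> w k \<in> vecs R D"
    "w b \<in> span R D S0 w"
  shows "rk R D w (insert b S0) = rk R D w S0"
proof (rule rk_span)
  have wc: "\<And>k j. k\<in>S0 \<Longrightarrow> j\<in>D \<Longrightarrow> w k j \<in> carrier R" 
    by (rule vecs_mem[OF assms(4)]) simp_all
  show "\<And>k. k \<in> insert b S0 \<Longrightarrow> w k \<in> span R D S0 w"
  proof -
    fix k assume k: "k \<in> insert b S0"
    show "w k \<in> span R D S0 w"
    proof (cases "k = b")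
      case True then show ?thesis using assms(5) by simp
    next
      case False
      then have kS0: "k \<in> S0" using k by blast
      show ?thesis by (rule self_in_span[where w=w and D=D, OF assms(1) kS0 assms(4)[OF k] wc])
    qed
  qed
qed (use assms in auto)

lemma rk_insert_notin:
  assumes fS0: "finite S0" and fD: "finite D" and bS0: "b \<notin> S0"
    and wv: "\<And>k. k \<in> insert b S0 \<Longrightarrow> w k \<in> vecs R D"
    and nsp: "w b \<notin> span R D S0 w"
  shows "rk R D w (insert b S0) = Suc (rk R D w S0)"
proof (rule antisym)
  have wc: "\<And>k j. k\<in>insert b S0 \<Longrightarrow> j\<in>D \<Longrightarrow> w k j \<in> carrier R" 
    by (rule vecs_mem[OF wv])
  obtain S where S: "S \<subseteq> S0" "indep R D w S" "card S = rk R D w S0" using rk_facts(1)[OF fS0] by blast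
  have fS: "finite S" using fS0 S(1) by (rule finite_subset[rotated])
  have bS: "b \<notin> S" using S(1) bS0 by blast
  have wcS: "\<And>k j. k\<in>S \<Longrightarrow> j\<in>D \<Longrightarrow> w k j \<in> carrier R" using wc S(1) by blast
  have wcS0: "\<And>k j. k\<in>S0 \<Longrightarrow> j\<in>D \<Longrightarrow> w k j \<in> carrier R" using wc by blast
  have "\<And>k. k \<in> S \<Longrightarrow> w k \<in> span R D S0 w"
  proof -
    fix k assume k: "k \<in> S"
    then have kS0: "k \<in> S0" using S(1) by blast
    have wk: "w k \<in> vecs R D" using wv kS0 by blast
    show "w k \<in> span R D S0 w" by (rule self_in_span[where w=w and D=D, OF fS0 kS0 wk wcS0])
  qed
  then have spS: "span R D S w \<subseteq> span R D S0 w" using fS0 fS wcS0 by (intro span_trans) auto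
  have "indep R D w (insert b S)"
    unfolding indep_def
  proof (intro allI impI)
    fix c assume c: "\<forall>k\<in>insert b S. c k \<in> carrier R"
      and z: "\<forall>j\<in>D. (\<Oplus>k\<in>insert b S. c k \<otimes> w k j) = \<zero>"
    have cb: "c b = \<zero>"
    proof (rule ccontr)
      assume cb0: "c b \<noteq> \<zero>"
      have "w b \<in> span R D S w"
      proof (rule insert_dep[where c=c])
        show "finite S" by (fact fS)
        show "b \<notin> S" by (fact bS)
        show "w b \<in> vecs R D" using wv by blast
        show "\<And>i j. i\<in>S \<Longrightarrow> j\<in>D \<Longrightarrow> w i j \<in> carrier R" by (rule wcS)
        show "\<And>i. i \<in> insert b S \<Longrightarrow> c i \<in> carrier R" using c by blast
        show "c b \<noteq> \<zero>" by (fact cb0)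
        show "\<And>j. j \<in> D \<Longrightarrow> (\<Oplus>k\<in>insert b S. c k \<otimes> w k j) = \<zero>" using z by blast
      qed
      then show False using spS nsp by blast
    qed
    have "\<forall>j\<in>D. (\<Oplus>i\<in>S. c i \<otimes> w i j) = \<zero>"
    proof
      fix j assume j: "j\<in>D"
      have Pi1: "(\<lambda>i. c i \<otimes> w i j) \<in> S \<rightarrow> carrier R" using c wcS j by auto
      have s: "(\<Oplus>i\<in>S. c i \<otimes> w i j) \<in> carrier R" using Pi1 by (rule finsum_closed)
      have wbj: "w b j \<in> carrier R" using wc j by blast
      have "(\<Oplus>i\<in>insert b S. c i \<otimes> w i j) = c b \<otimes> w b j \<oplus> (\<Oplus>i\<in>S. c i \<otimes> w i j)"
        using fS bS Pi1 c wbj by (intro finsum_insert) auto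
      also have "\<dots> = (\<Oplus>i\<in>S. c i \<otimes> w i j)" using cb wbj s by simp
      finally show "(\<Oplus>i\<in>S. c i \<otimes> w i j) = \<zero>" using z j by simp
    qed
    then have "\<forall>i\<in>S. c i = \<zero>" using S(2) c unfolding indep_def by blast
    then show "\<forall>k\<in>insert b S. c k = \<zero>" using cb by blast
  qed
  moreover have "insert b S \<subseteq> insert b S0" using S(1) by blast
  ultimately have "card (insert b S) \<le> rk R D w (insert b S0)"
    using fS0 by (intro rk_facts(2)) simp_all
  then show "Suc (rk R D w S0) \<le> rk R D w (insert b S0)" using S(3) fS bS by simp
  have fiS0: "finite (insert b S0)" using fS0 by simp
  obtain T where T: "T \<subseteq> insert b S0" "indep R D w T" "card T = rk R D w (insert b S0)"
    using rk_facts(1)[OF fiS0] by blast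
  have fT: "finite T" using finite_subset[OF T(1)] fS0 by simp
  have wcT: "\<And>k j. k\<in>T \<Longrightarrow> j\<in>D \<Longrightarrow> w k j \<in> carrier R" using wc T(1) by blast
  have "indep R D w (T - {b})" using T(2) _ fT wcT by (rule indep_subset) blast
  moreover have "T - {b} \<subseteq> S0" using T(1) by blast
  ultimately have "card (T - {b}) \<le> rk R D w S0" using fS0 by (intro rk_facts(2)) simp_all
  moreover have "card T \<le> Suc (card (T - {b}))"
    using fT by (cases "b \<in> T") (simp_all add: card_Diff_singleton card_gt_0_iff)
  ultimately show "rk R D w (insert b S0) \<le> Suc (rk R D w S0)" using T(3) by simp
qed

end

definition Hw :: "real \<Rightarrow> nat \<Rightarrow> nat \<Rightarrow> real" where
  "Hw qq N r = ((-1) ^ r * qq ^ (r choose 2)) / alpha_poly qq r (qq ^ N)"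

lemma alpha_nz:
  assumes "1 < qq" "r \<le> N"
  shows "alpha_poly qq r (qq ^ N) \<noteq> 0"
proof -
  have "\<And>j. j < r \<Longrightarrow> qq ^ N - qq ^ j \<noteq> 0"
  proof -
    fix j assume "j < r"
    then have "j < N" using assms(2) by simp
    then have "qq ^ j < qq ^ N" using assms(1) by (rule power_strict_increasing)
    then show "qq ^ N - qq ^ j \<noteq> 0" by simp
  qed
  then show ?thesis unfolding alpha_poly_def by (simp add: prod_zero_iff)
qed

lemma choose2_Suc: "Suc r choose 2 = (r choose 2) + r"
  by (simp add: numeral_2_eq_2)

lemma Hw_step:
  assumes "1 < qq" "r < N"
  shows "qq ^ r * Hw qq N r + (qq ^ N - qq ^ r) * Hw qq N (Suc r) = 0"
proof -
  define a where "a = alpha_poly qq r (qq ^ N)"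
  have anz: "a \<noteq> 0" unfolding a_def using assms by (intro alpha_nz) auto
  have aS: "alpha_poly qq (Suc r) (qq ^ N) = a * (qq ^ N - qq ^ r)"
    by (simp add: alpha_poly_def a_def)
  have "qq ^ r < qq ^ N" using assms by (intro power_strict_increasing) auto
  then have d: "qq ^ N - qq ^ r \<noteq> 0" by simp
  have "(qq ^ N - qq ^ r) * Hw qq N (Suc r) = - (qq ^ r * Hw qq N r)"
    unfolding Hw_def aS choose2_Suc a_def[symmetric] using anz d
    by (simp add: power_add field_simps)
  then show ?thesis by simp
qed

context ffield
begin

lemma phi_inner:
  assumes fD: "finite D" and fB: "finite B" and bB: "b \<notin> B"
    and g: "g \<in> PiE B (\<lambda>_. vecs R D)" and rlt: "rk R D g B < card D"
  shows "(\<Sum>v\<in>vecs R D. Hw (real q) (card D) (rk R D (g(b:=v)) (insert b B))) = 0"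
proof -
  define r where "r = rk R D g B"
  define Sp where "Sp = span R D B g"
  have gv: "\<And>k. k\<in>B \<Longrightarrow> g k \<in> vecs R D" using g by blast
  have gc: "\<And>k j. k\<in>B \<Longrightarrow> j\<in>D \<Longrightarrow> g k j \<in> carrier R" by (rule vecs_mem[OF gv])
  have Ssub: "Sp \<subseteq> vecs R D" unfolding Sp_def using fB gc by (rule span_vecs)
  have cardS: "card Sp = q ^ r" unfolding Sp_def r_def using fB gv by (rule card_span_rk)
  have key: "\<And>v. v \<in> vecs R D \<Longrightarrow> rk R D (g(b:=v)) (insert b B) = (if v \<in> Sp then r else Suc r)"
  proof -
    fix v assume v: "v \<in> vecs R D"
    define w where "w = g(b:=v)"
    have wv: "\<And>k. k \<in> insert b B \<Longrightarrow> w k \<in> vecs R D" using v gv unfolding w_def by auto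
    have wc: "\<And>k j. k\<in>B \<Longrightarrow> j\<in>D \<Longrightarrow> g k j = w k j" using bB unfolding w_def by auto
    have gc': "\<And>k j. k\<in>B \<Longrightarrow> j\<in>D \<Longrightarrow> w k j \<in> carrier R" using gc wc by simp
    have sp: "span R D B w = Sp" unfolding Sp_def using wc gc' by (intro span_cong[symmetric]) auto
    have rkw: "rk R D w B = r" unfolding r_def using wc gc' by (intro rk_cong[symmetric]) auto
    have wb: "w b = v" by (simp add: w_def)
    show "rk R D (g(b:=v)) (insert b B) = (if v \<in> Sp then r else Suc r)"
    proof (cases "v \<in> Sp")
      case True
      then have "w b \<in> span R D B w" using sp wb by simp
      then have "rk R D w (insert b B) = rk R D w B" using fB fD bB wv by (intro rk_insert_in) auto
      then show ?thesis using rkw True unfolding w_def by simp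
    next
      case False
      then have "w b \<notin> span R D B w" using sp wb by simp
      then have "rk R D w (insert b B) = Suc (rk R D w B)" using fB fD bB wv by (intro rk_insert_notin) auto
      then show ?thesis using rkw False unfolding w_def by simp
    qed
  qed
  have fV: "finite (vecs R D)" using fD by (rule finite_vecs)
  have "(\<Sum>v\<in>vecs R D. Hw (real q) (card D) (rk R D (g(b:=v)) (insert b B)))
      = (\<Sum>v\<in>vecs R D. if v \<in> Sp then Hw (real q) (card D) r else Hw (real q) (card D) (Suc r))"
    using key by (intro sum.cong) auto
  also have "\<dots> = (\<Sum>v\<in>Sp. Hw (real q) (card D) r) + (\<Sum>v\<in>vecs R D - Sp. Hw (real q) (card D) (Suc r))"
  proof -
    have e1: "vecs R D \<inter> {v. v \<in> Sp} = Sp" using Ssub by blast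
    have e2: "vecs R D \<inter> - {v. v \<in> Sp} = vecs R D - Sp" by blast
    show ?thesis using sum.If_cases[OF fV, of "\<lambda>v. v \<in> Sp" "\<lambda>_. Hw (real q) (card D) r"
        "\<lambda>_. Hw (real q) (card D) (Suc r)"] e1 e2 by simp
  qed
  also have "\<dots> = real (card Sp) * Hw (real q) (card D) r + real (card (vecs R D - Sp)) * Hw (real q) (card D) (Suc r)"
    by simp
  also have "card (vecs R D - Sp) = q ^ card D - q ^ r"
    using card_Diff_subset[OF finite_subset[OF Ssub fV] Ssub] card_vecs[OF fD] cardS by simp
  also have "real (q ^ card D - q ^ r) = real q ^ card D - real q ^ r"
  proof -
    have "r \<le> card D" using rlt unfolding r_def by simp
    then have "q ^ r \<le> q ^ card D" using q_ge2 by (intro power_increasing) simp_all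
    then show ?thesis by (simp add: of_nat_diff)
  qed
  also have "real (card Sp) = real q ^ r" using cardS by simp
  also have "real q ^ r * Hw (real q) (card D) r + (real q ^ card D - real q ^ r) * Hw (real q) (card D) (Suc r) = 0"
  proof (rule Hw_step)
    show "1 < real q" using q_ge2 by simp
    show "r < card D" using rlt unfolding r_def .
  qed
  finally show ?thesis .
qed

lemma phi_zero:
  assumes fD: "finite D" and fB: "finite B" and bB: "b \<notin> B" and cd: "card (insert b B) \<le> card D"
  shows "(\<Sum>w\<in>PiE (insert b B) (\<lambda>_. vecs R D). Hw (real q) (card D) (rk R D w (insert b B))) = 0"
proof -
  define f where "f = (\<lambda>w. Hw (real q) (card D) (rk R D w (insert b B)))"
  have "(\<Sum>w\<in>PiE (insert b B) (\<lambda>_. vecs R D). f w) = (\<Sum>(v,g)\<in>vecs R D \<times> PiE B (\<lambda>_. vecs R D). f (g(b:=v)))"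
    using bB by (intro sum.reindex_bij_witness[of _ "\<lambda>(y,g). g(b := y)" "\<lambda>g. (g b, g(b := undefined))"])
      (auto simp: PiE_def extensional_def)
  also have "\<dots> = (\<Sum>v\<in>vecs R D. \<Sum>g\<in>PiE B (\<lambda>_. vecs R D). f (g(b:=v)))"
    by (rule sum.cartesian_product[symmetric])
  also have "\<dots> = (\<Sum>g\<in>PiE B (\<lambda>_. vecs R D). \<Sum>v\<in>vecs R D. f (g(b:=v)))"
    by (rule sum.swap)
  also have "\<dots> = 0"
  proof (rule sum.neutral, rule ballI)
    fix g assume g: "g \<in> PiE B (\<lambda>_. vecs R D)"
    have "rk R D g B \<le> card B" using fB by (rule rk_facts(3))
    moreover have "card (insert b B) = Suc (card B)" using fB bB by simp
    ultimately have "rk R D g B < card D" using cd by simp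
    then show "(\<Sum>v\<in>vecs R D. f (g(b:=v))) = 0" unfolding f_def by (rule phi_inner[OF fD fB bB g])
  qed
  finally show ?thesis unfolding f_def .
qed

end

definition col :: "(nat \<Rightarrow> nat \<Rightarrow> 'a) \<Rightarrow> nat \<Rightarrow> nat \<Rightarrow> 'a" where
  "col A = (\<lambda>k j. A j k)"

definition Lm :: "('a,'b) ring_scheme \<Rightarrow> nat \<Rightarrow> (nat \<Rightarrow> nat \<Rightarrow> 'a) \<Rightarrow> (nat \<Rightarrow> nat \<Rightarrow> 'a) set" where
  "Lm K n x = {mat_mult K n r x | r. r \<in> mat_carrier K n}"

definition mat_one :: "('a,'b) ring_scheme \<Rightarrow> nat \<Rightarrow> (nat \<Rightarrow> nat \<Rightarrow> 'a)" where
  "mat_one K n = (\<lambda>j k. if j < n \<and> k < n then (if j = k then \<one>\<^bsub>K\<^esub> else \<zero>\<^bsub>K\<^esub>) else undefined)"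

context ffield
begin

lemma mc_in: "A \<in> mat_carrier R n \<Longrightarrow> j < n \<Longrightarrow> k < n \<Longrightarrow> A j k \<in> carrier R"
  by (simp add: mat_carrier_def)

lemma mc_out: "A \<in> mat_carrier R n \<Longrightarrow> \<not> (j < n \<and> k < n) \<Longrightarrow> A j k = undefined"
  by (simp add: mat_carrier_def)

lemma mc_intro:
  "(\<And>j k. j < n \<Longrightarrow> k < n \<Longrightarrow> A j k \<in> carrier R) \<Longrightarrow>
   (\<And>j k. \<not> (j < n \<and> k < n) \<Longrightarrow> A j k = undefined) \<Longrightarrow> A \<in> mat_carrier R n"
  by (simp add: mat_carrier_def)

lemma mc_eq:
  assumes "A \<in> mat_carrier R n" "B \<in> mat_carrier R n" "\<And>j k. j < n \<Longrightarrow> k < n \<Longrightarrow> A j k = B j k"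
  shows "A = B"
proof (intro ext)
  fix j k show "A j k = B j k"
  proof (cases "j < n \<and> k < n")
    case True then show ?thesis using assms(3) by blast
  next
    case False then show ?thesis using mc_out[OF assms(1) False] mc_out[OF assms(2) False] by simp
  qed
qed

lemma mm_apply: "j < n \<Longrightarrow> k < n \<Longrightarrow> mat_mult R n A B j k = (\<Oplus>l\<in>{..<n}. A j l \<otimes> B l k)"
  by (simp add: mat_mult_def)

lemma mm_closed:
  assumes "A \<in> mat_carrier R n" "B \<in> mat_carrier R n"
  shows "mat_mult R n A B \<in> mat_carrier R n"
proof (rule mc_intro)
  fix j k assume j: "j < n" and k: "k < n"
  have "(\<lambda>l. A j l \<otimes> B l k) \<in> {..<n} \<rightarrow> carrier R"
    using mc_in[OF assms(1) j] mc_in[OF assms(2) _ k] by auto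
  then show "mat_mult R n A B j k \<in> carrier R" using j k by (simp add: mm_apply finsum_closed)
next
  fix j k assume "\<not> (j < n \<and> k < n)"
  then show "mat_mult R n A B j k = undefined" unfolding mat_mult_def by meson
qed

lemma finite_mc: "finite (mat_carrier R n)"
proof -
  define f where "f = (\<lambda>A::nat \<Rightarrow> nat \<Rightarrow> 'a. \<lambda>p. A (fst p) (snd p))"
  have "f ` mat_carrier R n \<subseteq> PiE ({..<n} \<times> {..<n}) (\<lambda>_. carrier R)"
  proof
    fix g assume "g \<in> f ` mat_carrier R n"
    then obtain A where A: "A \<in> mat_carrier R n" and g: "g = f A" by blast
    show "g \<in> PiE ({..<n} \<times> {..<n}) (\<lambda>_. carrier R)"
      unfolding g f_def PiE_def extensional_def using mc_in[OF A] mc_out[OF A] by auto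
  qed
  moreover have "finite (PiE ({..<n} \<times> {..<n}) (\<lambda>_. carrier R))"
    by (intro finite_PiE) (simp_all add: fin_carrier)
  ultimately have "finite (f ` mat_carrier R n)" by (rule finite_subset)
  moreover have "inj_on f (mat_carrier R n)"
  proof (rule inj_onI)
    fix A B assume "f A = f B"
    then have "\<And>j k. A j k = B j k" unfolding f_def by (metis fst_conv snd_conv)
    then show "A = B" by (intro ext)
  qed
  ultimately show ?thesis by (rule finite_imageD)
qed

lemma finsum_swap_mult:
  assumes "finite A" "finite B" "\<And>i. i\<in>A \<Longrightarrow> a i \<in> carrier R" "\<And>j. j\<in>B \<Longrightarrow> b j \<in> carrier R"
    "\<And>i j. i\<in>A \<Longrightarrow> j\<in>B \<Longrightarrow> f i j \<in> carrier R"
  shows "(\<Oplus>i\<in>A. a i \<otimes> (\<Oplus>j\<in>B. b j \<otimes> f i j)) = (\<Oplus>j\<in>B. b j \<otimes> (\<Oplus>i\<in>A. a i \<otimes> f i j))"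
proof -
  have "(\<Oplus>i\<in>A. a i \<otimes> (\<Oplus>j\<in>B. b j \<otimes> f i j)) = (\<Oplus>i\<in>A. \<Oplus>j\<in>B. a i \<otimes> (b j \<otimes> f i j))"
  proof (rule finsum_cong')
    show "(\<lambda>i. \<Oplus>j\<in>B. a i \<otimes> (b j \<otimes> f i j)) \<in> A \<rightarrow> carrier R"
      using assms by (auto intro!: finsum_closed)
    fix i assume i: "i \<in> A"
    show "a i \<otimes> (\<Oplus>j\<in>B. b j \<otimes> f i j) = (\<Oplus>j\<in>B. a i \<otimes> (b j \<otimes> f i j))"
      using assms i by (intro finsum_rdistr) auto
  qed simp
  also have "\<dots> = (\<Oplus>j\<in>B. \<Oplus>i\<in>A. a i \<otimes> (b j \<otimes> f i j))"
    using assms by (intro finsum_swap) auto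
  also have "\<dots> = (\<Oplus>j\<in>B. b j \<otimes> (\<Oplus>i\<in>A. a i \<otimes> f i j))"
  proof (rule finsum_cong')
    show "(\<lambda>j. b j \<otimes> (\<Oplus>i\<in>A. a i \<otimes> f i j)) \<in> B \<rightarrow> carrier R"
      using assms by (auto intro!: finsum_closed)
    fix j assume j: "j \<in> B"
    have "(\<Oplus>i\<in>A. a i \<otimes> (b j \<otimes> f i j)) = (\<Oplus>i\<in>A. b j \<otimes> (a i \<otimes> f i j))"
    proof (rule finsum_cong')
      show "(\<lambda>i. b j \<otimes> (a i \<otimes> f i j)) \<in> A \<rightarrow> carrier R" using assms j by auto
      fix i assume i: "i \<in> A"
      show "a i \<otimes> (b j \<otimes> f i j) = b j \<otimes> (a i \<otimes> f i j)"
        using assms i j by (simp add: m_lcomm)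
    qed simp
    also have "\<dots> = b j \<otimes> (\<Oplus>i\<in>A. a i \<otimes> f i j)"
      using assms j by (intro finsum_rdistr[symmetric]) auto
    finally show "(\<Oplus>i\<in>A. a i \<otimes> (b j \<otimes> f i j)) = b j \<otimes> (\<Oplus>i\<in>A. a i \<otimes> f i j)" .
  qed simp
  finally show ?thesis .
qed

lemma mat_rank_rk: "mat_rank R n A = rk R {..<n} (col A) {..<n}"
proof -
  have "\<And>S. cols_indep R n A S \<longleftrightarrow> S \<subseteq> {..<n} \<and> indep R {..<n} (col A) S"
    unfolding cols_indep_def indep_def col_def by auto
  then show ?thesis unfolding mat_rank_def rk_def by simp
qed

lemma col_vecs: "A \<in> mat_carrier R n \<Longrightarrow> k < n \<Longrightarrow> col A k \<in> vecs R {..<n}"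
  unfolding vecs_def col_def PiE_def extensional_def using mc_in[of A n _ k] mc_out[of A n _ k] by auto

end

context ffield
begin

lemma surj_rows:
  assumes x: "x \<in> mat_carrier R n" and Bn: "B \<subseteq> {..<n}" and ind: "indep R {..<n} (col x) B"
    and z: "z \<in> vecs R B"
  shows "\<exists>\<rho>\<in>PiE {..<n} (\<lambda>_. carrier R). \<forall>b\<in>B. (\<Oplus>l\<in>{..<n}. \<rho> l \<otimes> x l b) = z b"
proof -
  define u where "u = (\<lambda>l. restrict (\<lambda>b. x l b) B)"
  have fB: "finite B" using Bn finite_subset by blast
  have xc: "\<And>l b. l < n \<Longrightarrow> b \<in> B \<Longrightarrow> x l b \<in> carrier R" using mc_in[OF x] Bn by blast
  have uv: "\<And>l. l \<in> {..<n} \<Longrightarrow> u l \<in> vecs R B"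
    unfolding u_def vecs_def using xc by auto
  have uc: "\<And>l b. l \<in> {..<n} \<Longrightarrow> b \<in> B \<Longrightarrow> u l b \<in> carrier R" by (rule vecs_mem[OF uv])
  have ub: "\<And>l b. b \<in> B \<Longrightarrow> u l b = x l b" by (simp add: u_def)
  have sub: "vecs R B \<subseteq> span R B {..<n} u"
  proof (rule ccontr)
    assume nsub: "\<not> vecs R B \<subseteq> span R B {..<n} u"
    have ssub: "span R B {..<n} u \<subseteq> vecs R B" using _ uc by (rule span_vecs) simp
    then have ps: "span R B {..<n} u \<subset> vecs R B" using nsub by blast
    have "card (span R B {..<n} u) < card (vecs R B)"
      using finite_vecs[OF fB] ps by (rule psubset_card_mono)
    moreover have "card (span R B {..<n} u) = q ^ rk R B u {..<n}"
      using _ uv by (rule card_span_rk) simp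
    moreover have "card (vecs R B) = q ^ card B" using fB by (rule card_vecs)
    ultimately have "q ^ rk R B u {..<n} < q ^ card B" by simp
    moreover have "1 < q" using q_ge2 by simp
    ultimately have rlt: "rk R B u {..<n} < card B" using power_less_imp_less_exp by blast
    have fn: "finite {..<n}" by simp
    obtain T where T: "T \<subseteq> {..<n}" "indep R B u T" "card T = rk R B u {..<n}"
      using rk_facts(1)[OF fn] by blast
    have fT: "finite T" using T(1) finite_subset by blast
    have Tn: "\<And>t. t \<in> T \<Longrightarrow> t < n" using T(1) by blast
    define psi where "psi = (\<lambda>c. restrict (\<lambda>t. \<Oplus>b\<in>B. c b \<otimes> x t b) T)"
    have "\<not> inj_on psi (vecs R B)"
    proof
      assume inj: "inj_on psi (vecs R B)"
      have "psi ` vecs R B \<subseteq> vecs R T"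
      proof
        fix v assume "v \<in> psi ` vecs R B"
        then obtain c where c: "c \<in> vecs R B" and v: "v = psi c" by blast
        have "\<And>t. t \<in> T \<Longrightarrow> (\<Oplus>b\<in>B. c b \<otimes> x t b) \<in> carrier R"
        proof -
          fix t assume t: "t \<in> T"
          have "(\<lambda>b. c b \<otimes> x t b) \<in> B \<rightarrow> carrier R"
            using vecs_mem[OF c] xc[OF Tn[OF t]] by auto
          then show "(\<Oplus>b\<in>B. c b \<otimes> x t b) \<in> carrier R" by (rule finsum_closed)
        qed
        then show "v \<in> vecs R T" unfolding v psi_def vecs_def by auto
      qed
      then have "card (vecs R B) \<le> card (vecs R T)"
        using card_inj_on_le[OF inj _ finite_vecs[OF fT]] by blast
      then have "q ^ card B \<le> q ^ card T" using card_vecs[OF fB] card_vecs[OF fT] by simp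
      moreover have "q ^ card T < q ^ card B"
        using rlt T(3) \<open>1 < q\<close> by (intro power_strict_increasing) simp_all
      ultimately show False by simp
    qed
    then obtain c1 c2 where c12: "c1 \<in> vecs R B" "c2 \<in> vecs R B" "c1 \<noteq> c2" "psi c1 = psi c2"
      unfolding inj_on_def by blast
    have c1c: "\<And>b. b\<in>B \<Longrightarrow> c1 b \<in> carrier R" by (rule vecs_mem[OF c12(1)])
    have c2c: "\<And>b. b\<in>B \<Longrightarrow> c2 b \<in> carrier R" by (rule vecs_mem[OF c12(2)])
    define d where "d = (\<lambda>b. c1 b \<ominus> c2 b)"
    have dc: "\<And>b. b\<in>B \<Longrightarrow> d b \<in> carrier R" using c1c c2c by (simp add: d_def)
    have dT: "\<And>t. t \<in> T \<Longrightarrow> (\<Oplus>b\<in>B. d b \<otimes> x t b) = \<zero>"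
    proof -
      fix t assume t: "t \<in> T"
      have tn: "t < n" using Tn[OF t] .
      have e: "(\<Oplus>b\<in>B. c1 b \<otimes> x t b) = (\<Oplus>b\<in>B. c2 b \<otimes> x t b)"
        using fun_cong[OF c12(4), of t] t by (simp add: psi_def)
      have "(\<Oplus>b\<in>B. d b \<otimes> x t b) = (\<Oplus>b\<in>B. c1 b \<otimes> x t b \<ominus> c2 b \<otimes> x t b)"
      proof (rule finsum_cong')
        show "(\<lambda>b. c1 b \<otimes> x t b \<ominus> c2 b \<otimes> x t b) \<in> B \<rightarrow> carrier R"
          using c1c c2c xc[OF tn] by auto
        fix b assume b: "b \<in> B"
        have a: "c1 b \<in> carrier R" "c2 b \<in> carrier R" "x t b \<in> carrier R"
          using c1c[OF b] c2c[OF b] xc[OF tn b] by auto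
        show "d b \<otimes> x t b = c1 b \<otimes> x t b \<ominus> c2 b \<otimes> x t b"
          unfolding d_def a_minus_def using a by (simp add: l_distr l_minus)
      qed simp
      also have "\<dots> = (\<Oplus>b\<in>B. c1 b \<otimes> x t b) \<ominus> (\<Oplus>b\<in>B. c2 b \<otimes> x t b)"
        using fB c1c c2c xc[OF tn] by (intro finsum_diff) auto
      also have "\<dots> = \<zero>"
      proof -
        have "(\<lambda>b. c2 b \<otimes> x t b) \<in> B \<rightarrow> carrier R" using c2c xc[OF tn] by auto
        then have "(\<Oplus>b\<in>B. c2 b \<otimes> x t b) \<in> carrier R" by (rule finsum_closed)
        then show ?thesis using e by (simp add: r_neg minus_eq)
      qed
      finally show "(\<Oplus>b\<in>B. d b \<otimes> x t b) = \<zero>" .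
    qed
    have dall: "\<forall>j\<in>{..<n}. (\<Oplus>b\<in>B. d b \<otimes> col x b j) = \<zero>"
    proof
      fix l assume l: "l \<in> {..<n}"
      have "u l \<in> span R B T u" using fn T(1) T(2) T(3) l uv by (rule span_max)
      then obtain e where e: "e \<in> PiE T (\<lambda>_. carrier R)" and ue: "u l = lc R B T e u"
        unfolding span_def by blast
      have ec: "\<And>t. t \<in> T \<Longrightarrow> e t \<in> carrier R" using e by blast
      have xe: "\<And>b. b\<in>B \<Longrightarrow> x l b = (\<Oplus>t\<in>T. e t \<otimes> x t b)"
      proof -
        fix b assume b: "b\<in>B"
        have "x l b = u l b" using b by (simp add: u_def)
        also have "\<dots> = (\<Oplus>t\<in>T. e t \<otimes> u t b)" using b ue by (simp add: lc_def)
        also have "\<dots> = (\<Oplus>t\<in>T. e t \<otimes> x t b)"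
        proof (rule finsum_cong')
          show "(\<lambda>t. e t \<otimes> x t b) \<in> T \<rightarrow> carrier R" using ec xc Tn b by auto
        qed (simp_all add: ub b)
        finally show "x l b = (\<Oplus>t\<in>T. e t \<otimes> x t b)" .
      qed
      have "(\<Oplus>b\<in>B. d b \<otimes> col x b l) = (\<Oplus>b\<in>B. d b \<otimes> (\<Oplus>t\<in>T. e t \<otimes> x t b))"
      proof (rule finsum_cong')
        show "(\<lambda>b. d b \<otimes> (\<Oplus>t\<in>T. e t \<otimes> x t b)) \<in> B \<rightarrow> carrier R"
          using dc ec xc Tn by (auto intro!: finsum_closed)
      qed (simp_all add: col_def xe)
      also have "\<dots> = (\<Oplus>t\<in>T. e t \<otimes> (\<Oplus>b\<in>B. d b \<otimes> x t b))"
        using fB fT dc ec xc Tn by (intro finsum_swap_mult) auto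
      also have "\<dots> = (\<Oplus>t\<in>T. \<zero>)"
      proof (rule finsum_cong')
        fix t assume t: "t \<in> T"
        show "e t \<otimes> (\<Oplus>b\<in>B. d b \<otimes> x t b) = \<zero>" using dT[OF t] ec[OF t] by simp
      qed simp_all
      also have "\<dots> = \<zero>" by (rule finsum_zero)
      finally show "(\<Oplus>b\<in>B. d b \<otimes> col x b l) = \<zero>" .
    qed
    then have "\<forall>b\<in>B. d b = \<zero>" using ind dc unfolding indep_def by blast
    then have "\<And>b. b \<in> B \<Longrightarrow> c1 b = c2 b"
      using c1c c2c unfolding d_def
      by (metis a_minus_def add.inv_closed add.inv_solve_right l_zero zero_closed)
    then have "c1 = c2" using c12(1,2) unfolding vecs_def by (intro PiE_ext[of c1 B _ c2]) auto
    then show False using c12(3) by blast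
  qed
  then have "z \<in> span R B {..<n} u" using z by blast
  then obtain \<rho> where \<rho>: "\<rho> \<in> PiE {..<n} (\<lambda>_. carrier R)" and z\<rho>: "z = lc R B {..<n} \<rho> u"
    unfolding span_def by blast
  have "\<forall>b\<in>B. (\<Oplus>l\<in>{..<n}. \<rho> l \<otimes> x l b) = z b"
  proof
    fix b assume b: "b\<in>B"
    have "z b = (\<Oplus>l\<in>{..<n}. \<rho> l \<otimes> u l b)" using z\<rho> b by (simp add: lc_def)
    also have "\<dots> = (\<Oplus>l\<in>{..<n}. \<rho> l \<otimes> x l b)"
    proof (rule finsum_cong')
      show "(\<lambda>l. \<rho> l \<otimes> x l b) \<in> {..<n} \<rightarrow> carrier R" using \<rho> xc[OF _ b] by auto
    qed (simp_all add: ub b)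
    finally show "(\<Oplus>l\<in>{..<n}. \<rho> l \<otimes> x l b) = z b" by simp
  qed
  then show ?thesis using \<rho> by blast
qed

end

context ffield
begin

lemma single_setup:
  assumes x: "x \<in> mat_carrier R n"
  obtains B e where "B \<subseteq> {..<n}" "indep R {..<n} (col x) B" "card B = mat_rank R n x"
    "\<And>k. k<n \<Longrightarrow> e k \<in> PiE B (\<lambda>_. carrier R)"
    "\<And>k l. k<n \<Longrightarrow> l<n \<Longrightarrow> x l k = (\<Oplus>b\<in>B. e k b \<otimes> x l b)"
proof -
  have fn: "finite {..<n}" by simp
  obtain B where B: "B \<subseteq> {..<n}" "indep R {..<n} (col x) B" "card B = rk R {..<n} (col x) {..<n}"
    using rk_facts(1)[OF fn] by blast
  have wv: "\<And>k. k \<in> {..<n} \<Longrightarrow> col x k \<in> vecs R {..<n}" using col_vecs[OF x] by simp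
  have "\<forall>k\<in>{..<n}. \<exists>c. c \<in> PiE B (\<lambda>_. carrier R) \<and> col x k = lc R {..<n} B c (col x)"
  proof
    fix k assume k: "k \<in> {..<n}"
    have "col x k \<in> span R {..<n} B (col x)" using fn B(1) B(2) B(3) k wv by (rule span_max)
    then show "\<exists>c. c \<in> PiE B (\<lambda>_. carrier R) \<and> col x k = lc R {..<n} B c (col x)"
      unfolding span_def by blast
  qed
  then obtain e where e: "\<And>k. k\<in>{..<n} \<Longrightarrow> e k \<in> PiE B (\<lambda>_. carrier R)"
    and ce: "\<And>k. k \<in> {..<n} \<Longrightarrow> col x k = lc R {..<n} B (e k) (col x)" by metis
  show ?thesis
  proof (rule that[OF B(1) B(2)])
    show "card B = mat_rank R n x" using B(3) mat_rank_rk by simp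
    show "\<And>k. k<n \<Longrightarrow> e k \<in> PiE B (\<lambda>_. carrier R)" using e by simp
    fix k l assume k: "k<n" and l: "l<n"
    have "x l k = col x k l" by (simp add: col_def)
    also have "\<dots> = lc R {..<n} B (e k) (col x) l" using ce k by simp
    also have "\<dots> = (\<Oplus>b\<in>B. e k b \<otimes> x l b)" using l by (simp add: lc_def col_def)
    finally show "x l k = (\<Oplus>b\<in>B. e k b \<otimes> x l b)" .
  qed
qed

lemma Lm_sub: "x \<in> mat_carrier R n \<Longrightarrow> Lm R n x \<subseteq> mat_carrier R n"
  unfolding Lm_def using mm_closed by blast

lemma Lm_cols:
  assumes x: "x \<in> mat_carrier R n" and Bn: "B \<subseteq> {..<n}"
    and e: "\<And>k. k<n \<Longrightarrow> e k \<in> PiE B (\<lambda>_. carrier R)"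
    and xe: "\<And>k l. k<n \<Longrightarrow> l<n \<Longrightarrow> x l k = (\<Oplus>b\<in>B. e k b \<otimes> x l b)"
    and y: "y \<in> Lm R n x" and k: "k < n" and j: "j < n"
  shows "y j k = (\<Oplus>b\<in>B. e k b \<otimes> y j b)"
proof -
  obtain r where r: "r \<in> mat_carrier R n" and yr: "y = mat_mult R n r x" using y unfolding Lm_def by blast
  have fB: "finite B" using Bn finite_subset by blast
  have ec: "\<And>b. b \<in> B \<Longrightarrow> e k b \<in> carrier R" using e[OF k] by blast
  have rc: "\<And>l. l \<in> {..<n} \<Longrightarrow> r j l \<in> carrier R" using mc_in[OF r j] by simp
  have xc: "\<And>l b. l \<in> {..<n} \<Longrightarrow> b \<in> B \<Longrightarrow> x l b \<in> carrier R" using mc_in[OF x] Bn by blast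
  have "y j k = (\<Oplus>l\<in>{..<n}. r j l \<otimes> x l k)" using yr j k by (simp add: mm_apply)
  also have "\<dots> = (\<Oplus>l\<in>{..<n}. r j l \<otimes> (\<Oplus>b\<in>B. e k b \<otimes> x l b))"
  proof (rule finsum_cong')
    show "(\<lambda>l. r j l \<otimes> (\<Oplus>b\<in>B. e k b \<otimes> x l b)) \<in> {..<n} \<rightarrow> carrier R"
      using rc ec xc by (auto intro!: finsum_closed)
  qed (simp_all add: xe[OF k])
  also have "\<dots> = (\<Oplus>b\<in>B. e k b \<otimes> (\<Oplus>l\<in>{..<n}. r j l \<otimes> x l b))"
    using fB rc ec xc by (intro finsum_swap_mult) auto
  also have "\<dots> = (\<Oplus>b\<in>B. e k b \<otimes> y j b)"
  proof (rule finsum_cong')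
    show "(\<lambda>b. e k b \<otimes> y j b) \<in> B \<rightarrow> carrier R"
      using ec mc_in[OF mm_closed[OF r x] j] Bn yr by auto
    fix b assume b: "b \<in> B"
    then have "b < n" using Bn by blast
    then show "e k b \<otimes> (\<Oplus>l\<in>{..<n}. r j l \<otimes> x l b) = e k b \<otimes> y j b"
      using yr j by (simp add: mm_apply)
  qed simp
  finally show ?thesis .
qed

lemma single_main:
  assumes x: "x \<in> mat_carrier R n"
  shows "\<And>y. y \<in> Lm R n x \<Longrightarrow> mat_rank R n y \<le> mat_rank R n x"
    and "x \<noteq> mat_zero R n \<Longrightarrow> (\<Sum>y\<in>Lm R n x. Hw (real q) n (mat_rank R n y)) = 0"
proof -
  obtain B e where Bn: "B \<subseteq> {..<n}" and ind: "indep R {..<n} (col x) B"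
    and cB: "card B = mat_rank R n x"
    and e: "\<And>k. k<n \<Longrightarrow> e k \<in> PiE B (\<lambda>_. carrier R)"
    and xe: "\<And>k l. k<n \<Longrightarrow> l<n \<Longrightarrow> x l k = (\<Oplus>b\<in>B. e k b \<otimes> x l b)"
    using single_setup[OF x] by blast
  have fB: "finite B" using Bn finite_subset by blast
  have fn: "finite {..<n}" by simp
  have yc: "\<And>y. y \<in> Lm R n x \<Longrightarrow> y \<in> mat_carrier R n" using Lm_sub[OF x] by blast
  have rky: "\<And>y. y \<in> Lm R n x \<Longrightarrow> mat_rank R n y = rk R {..<n} (col y) B"
  proof -
    fix y assume y: "y \<in> Lm R n x"
    have yv: "\<And>k. k \<in> {..<n} \<Longrightarrow> col y k \<in> vecs R {..<n}" using col_vecs[OF yc[OF y]] by simp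
    have "\<And>k. k \<in> {..<n} \<Longrightarrow> col y k \<in> span R {..<n} B (col y)"
    proof -
      fix k assume "k \<in> {..<n}"
      then have k: "k < n" by simp
      have "col y k = lc R {..<n} B (e k) (col y)"
      proof (rule ext)
        fix j show "col y k j = lc R {..<n} B (e k) (col y) j"
        proof (cases "j < n")
          case True
          then show ?thesis using Lm_cols[OF x Bn e xe y k True] by (simp add: col_def lc_def)
        next
          case False
          then show ?thesis using mc_out[OF yc[OF y], of j k] by (simp add: col_def lc_def)
        qed
      qed
      then show "col y k \<in> span R {..<n} B (col y)" using e[OF k] unfolding span_def by blast
    qed
    then have "rk R {..<n} (col y) {..<n} = rk R {..<n} (col y) B"
      using fn fn Bn yv by (intro rk_span) auto
    then show "mat_rank R n y = rk R {..<n} (col y) B" by (simp add: mat_rank_rk)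
  qed
  show "\<And>y. y \<in> Lm R n x \<Longrightarrow> mat_rank R n y \<le> mat_rank R n x"
    using rky rk_facts(3)[OF fB] cB by simp
  assume xnz: "x \<noteq> mat_zero R n"
  have "\<exists>j k. j < n \<and> k < n \<and> x j k \<noteq> \<zero>"
  proof (rule ccontr)
    assume "\<not> ?thesis"
    then have "\<And>j k. j < n \<Longrightarrow> k < n \<Longrightarrow> x j k = mat_zero R n j k" by (simp add: mat_zero_def)
    moreover have "mat_zero R n \<in> mat_carrier R n" by (rule mc_intro) (auto simp: mat_zero_def)
    ultimately have "x = mat_zero R n" using x by (intro mc_eq) auto
    then show False using xnz by simp
  qed
  then obtain j0 k0 where j0: "j0 < n" and k0: "k0 < n" and nz: "x j0 k0 \<noteq> \<zero>" by blast
  have "indep R {..<n} (col x) {k0}"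
    unfolding indep_def
  proof (intro allI impI ballI)
    fix c k assume c: "\<forall>k\<in>{k0}. c k \<in> carrier R"
      and z: "\<forall>j\<in>{..<n}. (\<Oplus>k\<in>{k0}. c k \<otimes> col x k j) = \<zero>" and k: "k \<in> {k0}"
    have c0: "c k0 \<in> carrier R" using c by simp
    have xc: "x j0 k0 \<in> carrier R" using mc_in[OF x j0 k0] .
    have "(\<Oplus>k\<in>{k0}. c k \<otimes> col x k j0) = c k0 \<otimes> x j0 k0"
      using finsum_insert[of "{}" k0 "\<lambda>k. c k \<otimes> col x k j0"] c0 xc by (simp add: col_def)
    then have "c k0 \<otimes> x j0 k0 = \<zero>" using z j0 by simp
    then have "c k0 = \<zero>" using integral[OF _ c0 xc] nz by blast
    then show "c k = \<zero>" using k by simp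
  qed
  then have "card {k0} \<le> rk R {..<n} (col x) {..<n}" using k0 by (intro rk_facts(2)[OF fn]) auto
  then have "1 \<le> card B" using cB by (simp add: mat_rank_rk)
  then obtain b where bB: "b \<in> B" by (metis card.empty card_ge_0_finite ex_in_conv not_one_le_zero)
  define h where "h = (\<lambda>y::nat \<Rightarrow> nat \<Rightarrow> 'a. restrict (col y) B)"
  have bij: "bij_betw h (Lm R n x) (PiE B (\<lambda>_. vecs R {..<n}))"
    unfolding bij_betw_def
  proof (intro conjI)
    show "inj_on h (Lm R n x)"
    proof (rule inj_onI)
      fix y1 y2 assume y1: "y1 \<in> Lm R n x" and y2: "y2 \<in> Lm R n x" and eq: "h y1 = h y2"
      have eqB: "\<And>b j. b \<in> B \<Longrightarrow> y1 j b = y2 j b"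
      proof -
        fix b j assume b: "b \<in> B"
        have "h y1 b j = h y2 b j" using eq by simp
        then show "y1 j b = y2 j b" using b by (simp add: h_def col_def)
      qed
      show "y1 = y2"
      proof (rule mc_eq[OF yc[OF y1] yc[OF y2]])
        fix j k assume j: "j < n" and k: "k < n"
        have "y1 j k = (\<Oplus>b\<in>B. e k b \<otimes> y1 j b)" by (rule Lm_cols[OF x Bn e xe y1 k j])
        also have "\<dots> = (\<Oplus>b\<in>B. e k b \<otimes> y2 j b)"
        proof (rule finsum_cong')
          show "(\<lambda>b. e k b \<otimes> y2 j b) \<in> B \<rightarrow> carrier R"
            using e[OF k] mc_in[OF yc[OF y2] j] Bn by auto
        qed (simp_all add: eqB)
        also have "\<dots> = y2 j k" by (rule Lm_cols[OF x Bn e xe y2 k j, symmetric])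
        finally show "y1 j k = y2 j k" .
      qed
    qed
    show "h ` Lm R n x = PiE B (\<lambda>_. vecs R {..<n})"
    proof
      show "h ` Lm R n x \<subseteq> PiE B (\<lambda>_. vecs R {..<n})"
      proof
        fix w assume "w \<in> h ` Lm R n x"
        then obtain y where y: "y \<in> Lm R n x" and w: "w = h y" by blast
        have "\<And>b. b \<in> B \<Longrightarrow> col y b \<in> vecs R {..<n}" using col_vecs[OF yc[OF y]] Bn by blast
        then show "w \<in> PiE B (\<lambda>_. vecs R {..<n})" unfolding w h_def by simp
      qed
      show "PiE B (\<lambda>_. vecs R {..<n}) \<subseteq> h ` Lm R n x"
      proof
        fix w assume w: "w \<in> PiE B (\<lambda>_. vecs R {..<n})"
        have wbv: "\<And>b. b \<in> B \<Longrightarrow> w b \<in> vecs R {..<n}" using w by blast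
        have "\<forall>j\<in>{..<n}. \<exists>\<rho>. \<rho> \<in> PiE {..<n} (\<lambda>_. carrier R) \<and> (\<forall>b\<in>B. (\<Oplus>l\<in>{..<n}. \<rho> l \<otimes> x l b) = w b j)"
        proof
          fix j assume j: "j \<in> {..<n}"
          have "restrict (\<lambda>b. w b j) B \<in> vecs R B"
          proof -
            have "\<And>b. b \<in> B \<Longrightarrow> w b j \<in> carrier R"
            proof -
              fix b assume b: "b \<in> B"
              show "w b j \<in> carrier R" by (rule vecs_mem[OF wbv[OF b] j])
            qed
            then show ?thesis unfolding vecs_def by auto
          qed
          from surj_rows[OF x Bn ind this] show "\<exists>\<rho>. \<rho> \<in> PiE {..<n} (\<lambda>_. carrier R) \<and> (\<forall>b\<in>B. (\<Oplus>l\<in>{..<n}. \<rho> l \<otimes> x l b) = w b j)"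
            by auto
        qed
        then obtain \<rho> where \<rho>: "\<And>j. j\<in>{..<n} \<Longrightarrow> \<rho> j \<in> PiE {..<n} (\<lambda>_. carrier R)"
          and \<rho>w: "\<And>j b. j\<in>{..<n} \<Longrightarrow> b\<in>B \<Longrightarrow> (\<Oplus>l\<in>{..<n}. \<rho> j l \<otimes> x l b) = w b j" by metis
        define r where "r = (\<lambda>j l. if j < n \<and> l < n then \<rho> j l else undefined)"
        have r: "r \<in> mat_carrier R n"
        proof (rule mc_intro)
          fix j l assume "j < n" "l < n" then show "r j l \<in> carrier R" using \<rho> by (auto simp: r_def)
        next
          fix j l assume "\<not> (j < n \<and> l < n)" then show "r j l = undefined" unfolding r_def by meson
        qed
        define y where "y = mat_mult R n r x"
        have y: "y \<in> Lm R n x" unfolding Lm_def y_def using r by blast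
        have "h y = w"
        proof (rule ext)
          fix b show "h y b = w b"
          proof (cases "b \<in> B")
            case False then show ?thesis using w by (simp add: h_def PiE_def extensional_def)
          next
            case True
            have bn: "b < n" using True Bn by blast
            show ?thesis
            proof (rule ext)
              fix j show "h y b j = w b j"
              proof (cases "j < n")
                case True
                have "h y b j = (\<Oplus>l\<in>{..<n}. r j l \<otimes> x l b)"
                  using \<open>b \<in> B\<close> True bn by (simp add: h_def col_def y_def mm_apply)
                also have "\<dots> = (\<Oplus>l\<in>{..<n}. \<rho> j l \<otimes> x l b)"
                proof (rule finsum_cong')
                  show "(\<lambda>l. \<rho> j l \<otimes> x l b) \<in> {..<n} \<rightarrow> carrier R"
                    using \<rho>[of j] True mc_in[OF x _ bn] by auto
                qed (simp_all add: r_def True)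
                also have "\<dots> = w b j" using \<rho>w[of j b] True \<open>b \<in> B\<close> by simp
                finally show ?thesis .
              next
                case False
                have "h y b j = undefined" using \<open>b \<in> B\<close> False by (simp add: h_def col_def y_def mat_mult_def)
                moreover have "w b j = undefined" using vecs_out[OF wbv[OF \<open>b \<in> B\<close>]] False by simp
                ultimately show ?thesis by simp
              qed
            qed
          qed
        qed
        then show "w \<in> h ` Lm R n x" using y by blast
      qed
    qed
  qed
  have "(\<Sum>y\<in>Lm R n x. Hw (real q) n (mat_rank R n y)) = (\<Sum>y\<in>Lm R n x. Hw (real q) n (rk R {..<n} (h y) B))"
  proof (rule sum.cong)
    fix y assume y: "y \<in> Lm R n x"
    have yv: "\<And>k. k \<in> B \<Longrightarrow> col y k \<in> vecs R {..<n}" using col_vecs[OF yc[OF y]] Bn by blast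
    have "rk R {..<n} (col y) B = rk R {..<n} (h y) B"
    proof (rule rk_cong)
      show "\<And>k j. k \<in> B \<Longrightarrow> j \<in> {..<n} \<Longrightarrow> col y k j = h y k j" by (simp add: h_def)
      show "\<And>k j. k \<in> B \<Longrightarrow> j \<in> {..<n} \<Longrightarrow> h y k j \<in> carrier R"
        using vecs_mem[OF yv] by (simp add: h_def)
    qed
    then show "Hw (real q) n (mat_rank R n y) = Hw (real q) n (rk R {..<n} (h y) B)" using rky[OF y] by simp
  qed simp
  also have "\<dots> = (\<Sum>w\<in>PiE B (\<lambda>_. vecs R {..<n}). Hw (real q) n (rk R {..<n} w B))"
    using bij by (rule sum.reindex_bij_betw)
  also have "\<dots> = 0"
  proof -
    have Bi: "B = insert b (B - {b})" using bB by blast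
    have "(\<Sum>w\<in>PiE (insert b (B - {b})) (\<lambda>_. vecs R {..<n}). Hw (real q) (card {..<n}) (rk R {..<n} w (insert b (B - {b})))) = 0"
    proof (rule phi_zero)
      show "finite (B - {b})" using fB by simp
      show "b \<notin> B - {b}" by simp
      show "card (insert b (B - {b})) \<le> card {..<n}" using Bi Bn card_mono[OF fn Bn] by simp
    qed simp
    then show ?thesis using Bi by simp
  qed
  finally show "(\<Sum>y\<in>Lm R n x. Hw (real q) n (mat_rank R n y)) = 0" .
qed

end

context ffield
begin

lemma mat_one_mc: "mat_one R n \<in> mat_carrier R n"
  by (rule mc_intro) (auto simp: mat_one_def)

lemma mat_one_mult:
  assumes x: "x \<in> mat_carrier R n"
  shows "mat_mult R n (mat_one R n) x = x"
proof (rule mc_eq[OF mm_closed[OF mat_one_mc x] x])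
  fix j k assume j: "j < n" and k: "k < n"
  have "mat_mult R n (mat_one R n) x j k = (\<Oplus>l\<in>{..<n}. mat_one R n j l \<otimes> x l k)"
    using j k by (rule mm_apply)
  also have "\<dots> = (\<Oplus>l\<in>{..<n}. if j = l then x l k else \<zero>)"
  proof (rule finsum_cong')
    show "(\<lambda>l. if j = l then x l k else \<zero>) \<in> {..<n} \<rightarrow> carrier R" using mc_in[OF x _ k] by auto
    fix l assume l: "l \<in> {..<n}"
    show "mat_one R n j l \<otimes> x l k = (if j = l then x l k else \<zero>)"
      using l j mc_in[OF x _ k] by (auto simp: mat_one_def)
  qed simp
  also have "\<dots> = x j k"
  proof (rule finsum_singleton)
    show "(\<lambda>l. x l k) \<in> {..<n} \<rightarrow> carrier R" using mc_in[OF x _ k] by auto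
  qed (use j in auto)
  finally show "mat_mult R n (mat_one R n) x j k = x j k" .
qed

lemma mm_assoc:
  assumes a: "a \<in> mat_carrier R n" and b: "b \<in> mat_carrier R n" and c: "c \<in> mat_carrier R n"
  shows "mat_mult R n (mat_mult R n a b) c = mat_mult R n a (mat_mult R n b c)"
proof (rule mc_eq[OF mm_closed[OF mm_closed[OF a b] c] mm_closed[OF a mm_closed[OF b c]]])
  fix j k assume j: "j < n" and k: "k < n"
  have ac: "\<And>l. l \<in> {..<n} \<Longrightarrow> a j l \<in> carrier R" using mc_in[OF a j] by simp
  have bc: "\<And>l l'. l \<in> {..<n} \<Longrightarrow> l' \<in> {..<n} \<Longrightarrow> b l l' \<in> carrier R" using mc_in[OF b] by simp
  have cc: "\<And>l. l \<in> {..<n} \<Longrightarrow> c l k \<in> carrier R" using mc_in[OF c _ k] by simp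
  have "mat_mult R n (mat_mult R n a b) c j k = (\<Oplus>l\<in>{..<n}. (\<Oplus>m\<in>{..<n}. a j m \<otimes> b m l) \<otimes> c l k)"
  proof -
    have "mat_mult R n (mat_mult R n a b) c j k = (\<Oplus>l\<in>{..<n}. mat_mult R n a b j l \<otimes> c l k)"
      using j k by (rule mm_apply)
    also have "\<dots> = (\<Oplus>l\<in>{..<n}. (\<Oplus>m\<in>{..<n}. a j m \<otimes> b m l) \<otimes> c l k)"
    proof (rule finsum_cong')
      show "(\<lambda>l. (\<Oplus>m\<in>{..<n}. a j m \<otimes> b m l) \<otimes> c l k) \<in> {..<n} \<rightarrow> carrier R"
        using ac bc cc by (auto intro!: finsum_closed)
    qed (simp_all add: mm_apply j)
    finally show ?thesis .
  qed
  also have "\<dots> = (\<Oplus>l\<in>{..<n}. \<Oplus>m\<in>{..<n}. a j m \<otimes> (b m l \<otimes> c l k))"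
  proof (rule finsum_cong')
    show "(\<lambda>l. \<Oplus>m\<in>{..<n}. a j m \<otimes> (b m l \<otimes> c l k)) \<in> {..<n} \<rightarrow> carrier R"
      using ac bc cc by (auto intro!: finsum_closed)
    fix l assume l: "l \<in> {..<n}"
    show "(\<Oplus>m\<in>{..<n}. a j m \<otimes> b m l) \<otimes> c l k = (\<Oplus>m\<in>{..<n}. a j m \<otimes> (b m l \<otimes> c l k))"
      using ac bc[OF _ l] cc[OF l] by (intro finsum_ldistr_assoc) auto
  qed simp
  also have "\<dots> = (\<Oplus>m\<in>{..<n}. \<Oplus>l\<in>{..<n}. a j m \<otimes> (b m l \<otimes> c l k))"
    using ac bc cc by (intro finsum_swap) auto
  also have "\<dots> = (\<Oplus>m\<in>{..<n}. a j m \<otimes> (\<Oplus>l\<in>{..<n}. b m l \<otimes> c l k))"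
  proof (rule finsum_cong')
    show "(\<lambda>m. a j m \<otimes> (\<Oplus>l\<in>{..<n}. b m l \<otimes> c l k)) \<in> {..<n} \<rightarrow> carrier R"
      using ac bc cc by (auto intro!: finsum_closed)
    fix m assume m: "m \<in> {..<n}"
    show "(\<Oplus>l\<in>{..<n}. a j m \<otimes> (b m l \<otimes> c l k)) = a j m \<otimes> (\<Oplus>l\<in>{..<n}. b m l \<otimes> c l k)"
      using ac[OF m] bc[OF m] cc by (intro finsum_rdistr[symmetric]) auto
  qed simp
  also have "\<dots> = mat_mult R n a (mat_mult R n b c) j k"
  proof -
    have "mat_mult R n a (mat_mult R n b c) j k = (\<Oplus>m\<in>{..<n}. a j m \<otimes> mat_mult R n b c m k)"
      using j k by (rule mm_apply)
    also have "\<dots> = (\<Oplus>m\<in>{..<n}. a j m \<otimes> (\<Oplus>l\<in>{..<n}. b m l \<otimes> c l k))"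
    proof (rule finsum_cong')
      show "(\<lambda>m. a j m \<otimes> (\<Oplus>l\<in>{..<n}. b m l \<otimes> c l k)) \<in> {..<n} \<rightarrow> carrier R"
        using ac bc cc by (auto intro!: finsum_closed)
    qed (simp_all add: mm_apply k)
    finally show ?thesis by simp
  qed
  finally show "mat_mult R n (mat_mult R n a b) c j k = mat_mult R n a (mat_mult R n b c) j k" .
qed

lemma Lm_self: "x \<in> mat_carrier R n \<Longrightarrow> x \<in> Lm R n x"
  unfolding Lm_def using mat_one_mult mat_one_mc by (metis (mono_tags, lifting) mem_Collect_eq)

lemma Lm_trans:
  assumes x: "x \<in> mat_carrier R n" and y: "y \<in> Lm R n x"
  shows "Lm R n y \<subseteq> Lm R n x"
proof
  fix z assume "z \<in> Lm R n y"
  then obtain s where s: "s \<in> mat_carrier R n" and z: "z = mat_mult R n s y" unfolding Lm_def by blast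
  obtain r where r: "r \<in> mat_carrier R n" and yr: "y = mat_mult R n r x" using y unfolding Lm_def by blast
  have "z = mat_mult R n (mat_mult R n s r) x" using z yr mm_assoc[OF s r x] by simp
  moreover have "mat_mult R n s r \<in> mat_carrier R n" using mm_closed[OF s r] .
  ultimately show "z \<in> Lm R n x" unfolding Lm_def by blast
qed

lemma finite_Lm: "x \<in> mat_carrier R n \<Longrightarrow> finite (Lm R n x)"
  using Lm_sub finite_mc finite_subset by blast

lemma mat_rank_zero: "mat_rank R n (mat_zero R n) = 0"
proof -
  have fn: "finite {..<n}" by simp
  obtain S where S: "S \<subseteq> {..<n}" "indep R {..<n} (col (mat_zero R n)) S"
    "card S = rk R {..<n} (col (mat_zero R n)) {..<n}" using rk_facts(1)[OF fn] by blast
  have "S = {}"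
  proof (rule ccontr)
    assume "S \<noteq> {}"
    then obtain k where k: "k \<in> S" by blast
    have fS: "finite S" using S(1) finite_subset by blast
    have "\<forall>j\<in>{..<n}. (\<Oplus>i\<in>S. (\<lambda>_. \<one>) i \<otimes> col (mat_zero R n) i j) = \<zero>"
    proof
      fix j assume j: "j \<in> {..<n}"
      have "(\<Oplus>i\<in>S. (\<lambda>_. \<one>) i \<otimes> col (mat_zero R n) i j) = (\<Oplus>i\<in>S. \<zero>)"
      proof (rule finsum_cong')
        fix i assume i: "i \<in> S"
        then have "i < n" using S(1) by blast
        then show "(\<lambda>_. \<one>) i \<otimes> col (mat_zero R n) i j = \<zero>" using j by (simp add: col_def mat_zero_def)
      qed simp_all
      also have "\<dots> = \<zero>" by (rule finsum_zero)
      finally show "(\<Oplus>i\<in>S. (\<lambda>_. \<one>) i \<otimes> col (mat_zero R n) i j) = \<zero>" .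
    qed
    moreover have "\<forall>i\<in>S. (\<lambda>_. \<one>) i \<in> carrier R" by simp
    ultimately have "\<forall>i\<in>S. (\<lambda>_. \<one>) i = \<zero>"
      using S(2) unfolding indep_def by (rule_tac mp[OF mp[OF spec[of _ "\<lambda>_. \<one>"]]])
    then show False using k by simp
  qed
  then show ?thesis using S(3) by (simp add: mat_rank_rk)
qed

end

lemma ffieldI: "field R \<Longrightarrow> finite (carrier R) \<Longrightarrow> ffield R"
  by (simp add: ffield_def ffield_axioms_def)

lemma weight_unique:
  fixes C :: "'x set" and L :: "'x \<Rightarrow> 'x set" and z :: 'x and w1 w2 :: "'x \<Rightarrow> real"
  assumes fin: "finite C" and self: "\<And>x. x\<in>C \<Longrightarrow> x \<in> L x" and sub: "\<And>x. x\<in>C \<Longrightarrow> L x \<subseteq> C"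
    and trans: "\<And>x y. x\<in>C \<Longrightarrow> y \<in> L x \<Longrightarrow> L y \<subseteq> L x"
    and a1: "w1 z = 0" and b1: "\<And>x y. x\<in>C \<Longrightarrow> y\<in>C \<Longrightarrow> L x = L y \<Longrightarrow> w1 x = w1 y"
    and c1: "\<And>x. x\<in>C \<Longrightarrow> x \<noteq> z \<Longrightarrow> (\<Sum>y\<in>L x. w1 y) = real (card (L x))"
    and a2: "w2 z = 0" and b2: "\<And>x y. x\<in>C \<Longrightarrow> y\<in>C \<Longrightarrow> L x = L y \<Longrightarrow> w2 x = w2 y"
    and c2: "\<And>x. x\<in>C \<Longrightarrow> x \<noteq> z \<Longrightarrow> (\<Sum>y\<in>L x. w2 y) = real (card (L x))"
  shows "\<And>x. x \<in> C \<Longrightarrow> w1 x = w2 x"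
proof -
  have main: "\<forall>x\<in>C. card (L x) = N \<longrightarrow> w1 x = w2 x" for N
  proof (induction N rule: less_induct)
    case (less N)
    show ?case
    proof (intro ballI impI)
      fix x assume x: "x \<in> C" and cN: "card (L x) = N"
      show "w1 x = w2 x"
      proof (cases "x = z")
        case True then show ?thesis using a1 a2 by simp
      next
        case False
        have fL: "finite (L x)" using sub[OF x] fin finite_subset by blast
        define G where "G = {y \<in> L x. L y = L x}"
        have GL: "G \<subseteq> L x" by (auto simp: G_def)
        have fG: "finite G" using fL GL finite_subset by blast
        have xG: "x \<in> G" using self[OF x] by (simp add: G_def)
        have yC: "\<And>y. y \<in> L x \<Longrightarrow> y \<in> C" using sub[OF x] by blast
        have split: "\<And>w::'x \<Rightarrow> real. (\<Sum>y\<in>L x. w y) = (\<Sum>y\<in>G. w y) + (\<Sum>y\<in>L x - G. w y)"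
          using sum.subset_diff[OF GL fL] by (simp add: add.commute)
        have g1: "(\<Sum>y\<in>G. w1 y) = real (card G) * w1 x"
        proof -
          have "(\<Sum>y\<in>G. w1 y) = (\<Sum>y\<in>G. w1 x)"
          proof (rule sum.cong)
            fix y assume y: "y \<in> G"
            then have "y \<in> L x" "L y = L x" by (auto simp: G_def)
            then show "w1 y = w1 x" using b1[OF yC[OF \<open>y \<in> L x\<close>] x] by blast
          qed simp
          then show ?thesis by simp
        qed
        have g2: "(\<Sum>y\<in>G. w2 y) = real (card G) * w2 x"
        proof -
          have "(\<Sum>y\<in>G. w2 y) = (\<Sum>y\<in>G. w2 x)"
          proof (rule sum.cong)
            fix y assume y: "y \<in> G"
            then have "y \<in> L x" "L y = L x" by (auto simp: G_def)
            then show "w2 y = w2 x" using b2[OF yC[OF \<open>y \<in> L x\<close>] x] by blast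
          qed simp
          then show ?thesis by simp
        qed
        have rst: "(\<Sum>y\<in>L x - G. w1 y) = (\<Sum>y\<in>L x - G. w2 y)"
        proof (rule sum.cong)
          fix y assume y: "y \<in> L x - G"
          then have yL: "y \<in> L x" and ne: "L y \<noteq> L x" by (auto simp: G_def)
          have "L y \<subset> L x" using trans[OF x yL] ne by blast
          then have "card (L y) < card (L x)" using fL by (rule psubset_card_mono[rotated])
          then have "card (L y) < N" using cN by simp
          then show "w1 y = w2 y" using less.IH yC[OF yL] by blast
        qed simp
        have "real (card G) * w1 x = real (card G) * w2 x"
          using c1[OF x False] c2[OF x False] split[of w1] split[of w2] g1 g2 rst by linarith
        moreover have "card G > 0" using fG xG card_gt_0_iff by blast
        ultimately show ?thesis by simp
      qed
    qed
  qed
  fix x assume "x \<in> C"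
  then show "w1 x = w2 x" using main by blast
qed

lemma prod_carrier_PiE: "prod_carrier t m F = PiE {..<t} (\<lambda>i. mat_carrier (F i) (m i))"
  unfolding prod_carrier_def PiE_def extensional_def by auto

lemma left_ideal_PiE:
  assumes x: "x \<in> prod_carrier t m F"
  shows "left_ideal t m F x = PiE {..<t} (\<lambda>i. Lm (F i) (m i) (x i))"
proof
  show "left_ideal t m F x \<subseteq> PiE {..<t} (\<lambda>i. Lm (F i) (m i) (x i))"
  proof
    fix y assume "y \<in> left_ideal t m F x"
    then obtain r where r: "r \<in> prod_carrier t m F" and y: "y = prod_mult t m F r x"
      unfolding left_ideal_def by blast
    have "\<And>i. i < t \<Longrightarrow> y i \<in> Lm (F i) (m i) (x i)"
      using r unfolding y prod_mult_def Lm_def prod_carrier_def by auto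
    moreover have "\<And>i. \<not> i < t \<Longrightarrow> y i = undefined" unfolding y prod_mult_def by simp
    ultimately show "y \<in> PiE {..<t} (\<lambda>i. Lm (F i) (m i) (x i))"
      unfolding PiE_def extensional_def by auto
  qed
  show "PiE {..<t} (\<lambda>i. Lm (F i) (m i) (x i)) \<subseteq> left_ideal t m F x"
  proof
    fix y assume y: "y \<in> PiE {..<t} (\<lambda>i. Lm (F i) (m i) (x i))"
    have "\<forall>i\<in>{..<t}. \<exists>ri. ri \<in> mat_carrier (F i) (m i) \<and> y i = mat_mult (F i) (m i) ri (x i)"
      using y unfolding Lm_def by blast
    then obtain rr where rr: "\<And>i. i\<in>{..<t} \<Longrightarrow> rr i \<in> mat_carrier (F i) (m i)"
      and yr: "\<And>i. i\<in>{..<t} \<Longrightarrow> y i = mat_mult (F i) (m i) (rr i) (x i)" by metis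
    define r where "r = (\<lambda>i. if i < t then rr i else undefined)"
    have r: "r \<in> prod_carrier t m F" using rr unfolding prod_carrier_def r_def by auto
    have "prod_mult t m F r x = y"
    proof (rule ext)
      fix i show "prod_mult t m F r x i = y i"
      proof (cases "i < t")
        case True then show ?thesis using yr[of i] by (simp add: prod_mult_def r_def)
      next
        case False then show ?thesis using y by (simp add: prod_mult_def PiE_def extensional_def)
      qed
    qed
    then show "y \<in> left_ideal t m F x" using r unfolding left_ideal_def by blast
  qed
qed

lemma Hw_zero: "Hw qq N 0 = 1"
  by (simp add: Hw_def alpha_poly_def numeral_2_eq_2)

theorem theorem4p1:
  fixes t :: nat and m :: "nat \<Rightarrow> nat" and F :: "nat \<Rightarrow> ('a, 'b) ring_scheme"
  assumes "0 < t"
    and "\<forall>i<t. field (F i) \<and> finite (carrier (F i)) \<and> 0 < m i"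
  shows "is_norm_hom_weight t m F (hom_weight_formula t m F) \<and>
         (\<forall>\<omega>. is_norm_hom_weight t m F \<omega> \<longrightarrow>
              (\<forall>A\<in>prod_carrier t m F. \<omega> A = hom_weight_formula t m F A))"
proof -
  have FF: "\<And>i. i<t \<Longrightarrow> ffield (F i)" using assms(2) by (auto intro: ffieldI)
  define P where "P = prod_carrier t m F"
  define L where "L = left_ideal t m F"
  define f where "f = hom_weight_formula t m F"
  define z where "z = prod_zero t m F"
  define g where "g = (\<lambda>i a. Hw (real (card (carrier (F i)))) (m i) (mat_rank (F i) (m i) a))"
  have f_eq: "\<And>A. f A = 1 - (\<Prod>i<t. g i (A i))"
    unfolding f_def hom_weight_formula_def g_def Hw_def Let_def by simp
  have LP: "\<And>x. x\<in>P \<Longrightarrow> L x = PiE {..<t} (\<lambda>i. Lm (F i) (m i) (x i))"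
    unfolding L_def P_def by (rule left_ideal_PiE)
  have PP: "P = PiE {..<t} (\<lambda>i. mat_carrier (F i) (m i))" unfolding P_def by (rule prod_carrier_PiE)
  have xi: "\<And>x i. x \<in> P \<Longrightarrow> i < t \<Longrightarrow> x i \<in> mat_carrier (F i) (m i)" using PP by auto
  have finP: "finite P" unfolding PP
    by (rule finite_PiE) (use FF ffield.finite_mc in auto)
  have self: "\<And>x. x\<in>P \<Longrightarrow> x \<in> L x"
  proof -
    fix x assume x: "x \<in> P"
    have "\<And>i. i < t \<Longrightarrow> x i \<in> Lm (F i) (m i) (x i)"
      using ffield.Lm_self[OF FF xi[OF x]] by blast
    moreover have "x \<in> extensional {..<t}" using x PP by (simp add: PiE_def)
    ultimately show "x \<in> L x" using LP[OF x] by (simp add: PiE_def)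
  qed
  have sub: "\<And>x. x\<in>P \<Longrightarrow> L x \<subseteq> P"
  proof -
    fix x assume x: "x \<in> P"
    have "PiE {..<t} (\<lambda>i. Lm (F i) (m i) (x i)) \<subseteq> PiE {..<t} (\<lambda>i. mat_carrier (F i) (m i))"
      using ffield.Lm_sub[OF FF xi[OF x]] by (intro PiE_mono) simp
    then show "L x \<subseteq> P" using LP[OF x] PP by simp
  qed
  have trans: "\<And>x y. x\<in>P \<Longrightarrow> y \<in> L x \<Longrightarrow> L y \<subseteq> L x"
  proof -
    fix x y assume x: "x \<in> P" and y: "y \<in> L x"
    have yP: "y \<in> P" using sub[OF x] y by blast
    have yi: "\<And>i. i < t \<Longrightarrow> y i \<in> Lm (F i) (m i) (x i)" using y LP[OF x] by auto
    have "PiE {..<t} (\<lambda>i. Lm (F i) (m i) (y i)) \<subseteq> PiE {..<t} (\<lambda>i. Lm (F i) (m i) (x i))"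
      using ffield.Lm_trans[OF FF xi[OF x] yi] by (intro PiE_mono) simp
    then show "L y \<subseteq> L x" using LP[OF x] LP[OF yP] by simp
  qed
  have zP: "z \<in> P" unfolding z_def PP prod_zero_def
  proof (rule PiE_I)
    fix i assume i: "i \<in> {..<t}"
    interpret ffield "F i" using FF i by simp
    show "(if i < t then mat_zero (F i) (m i) else undefined) \<in> mat_carrier (F i) (m i)"
      using i by (auto simp: mat_carrier_def mat_zero_def)
  qed simp
  have f0: "f z = 0"
  proof -
    have "\<And>i. i \<in> {..<t} \<Longrightarrow> g i (z i) = 1"
      using ffield.mat_rank_zero[OF FF] by (simp add: g_def z_def prod_zero_def Hw_zero)
    then have "(\<Prod>i<t. g i (z i)) = 1" by simp
    then show ?thesis using f_eq by simp
  qed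
  have feq: "\<And>x y. x\<in>P \<Longrightarrow> y\<in>P \<Longrightarrow> L x = L y \<Longrightarrow> f x = f y"
  proof -
    fix x y assume x: "x \<in> P" and y: "y \<in> P" and eq: "L x = L y"
    have ne: "\<And>i. i\<in>{..<t} \<Longrightarrow> Lm (F i) (m i) (x i) \<noteq> {}"
      using ffield.Lm_self[OF FF xi[OF x]] by blast
    have ne2: "\<And>i. i\<in>{..<t} \<Longrightarrow> Lm (F i) (m i) (y i) \<noteq> {}"
      using ffield.Lm_self[OF FF xi[OF y]] by blast
    have "\<forall>i\<in>{..<t}. Lm (F i) (m i) (x i) = Lm (F i) (m i) (y i)"
    proof -
      have "PiE {..<t} (\<lambda>i. Lm (F i) (m i) (x i)) = PiE {..<t} (\<lambda>i. Lm (F i) (m i) (y i))"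
        using eq LP[OF x] LP[OF y] by simp
      then show ?thesis
        using PiE_eq_iff_not_empty[of "{..<t}" "\<lambda>i. Lm (F i) (m i) (x i)" "\<lambda>i. Lm (F i) (m i) (y i)", OF ne ne2]
        by blast
    qed
    then have "\<And>i. i < t \<Longrightarrow> mat_rank (F i) (m i) (x i) = mat_rank (F i) (m i) (y i)"
    proof -
      fix i assume i: "i < t" and h: "\<forall>i\<in>{..<t}. Lm (F i) (m i) (x i) = Lm (F i) (m i) (y i)"
      have e: "Lm (F i) (m i) (x i) = Lm (F i) (m i) (y i)" using h i by simp
      have "y i \<in> Lm (F i) (m i) (x i)" using e ffield.Lm_self[OF FF[OF i] xi[OF y i]] by simp
      then have 1: "mat_rank (F i) (m i) (y i) \<le> mat_rank (F i) (m i) (x i)"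
        by (rule ffield.single_main(1)[OF FF[OF i] xi[OF x i]])
      have "x i \<in> Lm (F i) (m i) (y i)" using e ffield.Lm_self[OF FF[OF i] xi[OF x i]] by simp
      then have 2: "mat_rank (F i) (m i) (x i) \<le> mat_rank (F i) (m i) (y i)"
        by (rule ffield.single_main(1)[OF FF[OF i] xi[OF y i]])
      show "mat_rank (F i) (m i) (x i) = mat_rank (F i) (m i) (y i)" using 1 2 by simp
    qed
    then have "(\<Prod>i<t. g i (x i)) = (\<Prod>i<t. g i (y i))" by (intro prod.cong) (simp_all add: g_def)
    then show "f x = f y" using f_eq by simp
  qed
  have fsum: "\<And>x. x\<in>P \<Longrightarrow> x \<noteq> z \<Longrightarrow> (\<Sum>y\<in>L x. f y) = real (card (L x))"
  proof -
    fix x assume x: "x \<in> P" and xz: "x \<noteq> z"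
    obtain i0 where i0: "i0 < t" and nz: "x i0 \<noteq> mat_zero (F i0) (m i0)"
    proof (rule ccontr)
      assume "\<not> thesis"
      then have h: "\<And>i. i < t \<Longrightarrow> x i = mat_zero (F i) (m i)" using that by blast
      have "x = z"
      proof (rule ext)
        fix i show "x i = z i"
        proof (cases "i < t")
          case True then show ?thesis using h by (simp add: z_def prod_zero_def)
        next
          case False then show ?thesis using x PP by (simp add: z_def prod_zero_def PiE_def extensional_def)
        qed
      qed
      then show False using xz by simp
    qed
    have fL: "\<And>i. i \<in> {..<t} \<Longrightarrow> finite (Lm (F i) (m i) (x i))"
      using ffield.finite_Lm[OF FF xi[OF x]] by simp
    have finL: "finite (L x)" using finite_subset[OF sub[OF x] finP] .
    have "(\<Sum>y\<in>L x. (\<Prod>i<t. g i (y i))) = (\<Sum>y\<in>PiE {..<t} (\<lambda>i. Lm (F i) (m i) (x i)). (\<Prod>i<t. g i (y i)))"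
      using LP[OF x] by simp
    also have "\<dots> = (\<Prod>i<t. \<Sum>a\<in>Lm (F i) (m i) (x i). g i a)"
      by (rule prod_sum_PiE[symmetric]) (use fL in auto)
    also have "\<dots> = 0"
    proof (rule prod_zero)
      have "(\<Sum>a\<in>Lm (F i0) (m i0) (x i0). g i0 a) = 0"
        unfolding g_def using ffield.single_main(2)[OF FF[OF i0] xi[OF x i0] nz] .
      then show "\<exists>i\<in>{..<t}. (\<Sum>a\<in>Lm (F i) (m i) (x i). g i a) = 0" using i0 by blast
    qed simp
    finally have G0: "(\<Sum>y\<in>L x. (\<Prod>i<t. g i (y i))) = 0" .
    have "(\<Sum>y\<in>L x. f y) = (\<Sum>y\<in>L x. 1 - (\<Prod>i<t. g i (y i)))" using f_eq by simp
    also have "\<dots> = (\<Sum>y\<in>L x. 1) - (\<Sum>y\<in>L x. (\<Prod>i<t. g i (y i)))" by (rule sum_subtractf)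
    also have "\<dots> = real (card (L x))" using G0 by simp
    finally show "(\<Sum>y\<in>L x. f y) = real (card (L x))" .
  qed
  have W: "is_norm_hom_weight t m F f"
    unfolding is_norm_hom_weight_def P_def[symmetric] L_def[symmetric] z_def[symmetric]
  proof (intro conjI ballI impI)
    show "f z = 0" by (rule f0)
    fix x y assume "x \<in> P" "y \<in> P" "L x = L y"
    then show "f x = f y" by (rule feq)
  next
    fix x assume "x \<in> P" "x \<noteq> z"
    then show "(\<Sum>y\<in>L x. f y) = real (card (L x))" by (rule fsum)
  qed
  have U: "\<forall>\<omega>. is_norm_hom_weight t m F \<omega> \<longrightarrow> (\<forall>A\<in>P. \<omega> A = f A)"
  proof (intro allI impI ballI)
    fix \<omega> A assume w: "is_norm_hom_weight t m F \<omega>" and A: "A \<in> P"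
    have a1: "\<omega> z = 0" and b1: "\<And>x y. x\<in>P \<Longrightarrow> y\<in>P \<Longrightarrow> L x = L y \<Longrightarrow> \<omega> x = \<omega> y"
      and c1: "\<And>x. x\<in>P \<Longrightarrow> x \<noteq> z \<Longrightarrow> (\<Sum>y\<in>L x. \<omega> y) = real (card (L x))"
      using w unfolding is_norm_hom_weight_def P_def[symmetric] L_def[symmetric] z_def[symmetric] by blast+
    show "\<omega> A = f A"
      by (rule weight_unique[OF finP self sub trans a1 b1 c1 f0 feq fsum A])
  qed
  show ?thesis using W U unfolding f_def P_def by blast
qed

end
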